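(* Let $k\geq0$, $j\geq1$, let $\lambda=(\lambda_1,\ldots,\lambda_{j-1})$ and $\mu=(\mu_{j+2},\ldots,\mu_\ell)$ be integer vectors, and let $D$ be a valid set of pairs. Assume that $\sigma^j=\sigma^{j+1}=\mathfrak{c}$, $(j,j+1)\in D$, and that for each $h>j+1$, $(j,h)\in D$ if and only if $(j+1,h)\in D$. Work modulo the ideal generated by the relations $\mathfrak{c}_p\mathfrak{c}_p+2\sum_{i=1}^p(-1)^i\mathfrak{c}_{p+i}\mathfrak{c}_{p-i}=0$ for all $p>k$. (a) If $r,s\in\mathbb{Z}$ satisfy $r+s>2k$, then $R^D\sigma_{\lambda,r,s,\mu}=-R^D\sigma_{\lambda,s,r,\mu}$ in $\mathbb{Z}[\sigma]$ modulo these relations. (b) For any integer $r>k$, $R^D\tau_{\lambda,r+1,r,\mu}=R^D\sigma_{\lambda,r+1,r,\mu}$ in $\mathbb{Z}[\sigma,z]$ modulo these relations.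
   Context: For each $r\geq1$, $\sigma^r=(\sigma^r_i)_{i\in\mathbb{Z}}$ is a sequence of variables with $\sigma^r_0=1$, $\sigma^r_i=0$ for $i<0$; $\mathbb{Z}[\sigma]$ is the polynomial ring in these variables; $\mathfrak{c}=(\mathfrak{c}_i)_{i\in\mathbb{Z}}$ is a sequence of variables (so $\mathfrak{c}_0=1$, $\mathfrak{c}_i=0$ for $i<0$ here). $\sigma_\alpha:=\sigma^1_{\alpha_1}\sigma^2_{\alpha_2}\cdots$; $(\lambda,r,s,\mu)$ is the concatenation. $R_{ij}$ ($i<j$) raises entry $i$ and lowers entry $j$ by 1; $R\sigma_\alpha:=\sigma_{R\alpha}$ for monomials $R$. A valid set of pairs is a finite order ideal $D$ in $\{(i,j)\mid1\leq i<j\}$ with $(i',j')\leq(i,j)$ iff $i'\leq i$, $j'\leq j$. $R^D:=\prod_{1\leq i<j\leq\ell}(1-R_{ij})\prod_{(i,j)\in D}(1+R_{ij})^{-1}$, expanded and applied linearly. $z$ a variable; $\tau^r:=\sigma^r$ for $r\neq j$, $\tau^j_p:=\sigma^j_p+z\sigma^j_{p-1}$; $\tau_\alpha$ and $R\tau_\alpha:=\tau_{R\alpha}$ analogously. *)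

theory Defs
  imports "HOL-Computational_Algebra.Formal_Power_Series"
begin

(* Integer vectors alpha = (alpha_1,...,alpha_l) are int lists; entry m (1 <= m <= l)
   is  alpha ! (m - 1).  A family sigma^r_i is a function  sig :: nat => int => 'a. *)

definition smon :: "(nat \<Rightarrow> int \<Rightarrow> 'a::comm_ring_1) \<Rightarrow> int list \<Rightarrow> 'a" where
  "smon sig \<alpha> = (\<Prod>m\<in>{1..length \<alpha>}. sig m (\<alpha> ! (m - 1)))"

definition pairs :: "nat \<Rightarrow> (nat \<times> nat) set" where
  "pairs l = {(i, j). 1 \<le> i \<and> i < j \<and> j \<le> l}"

definition valid_pairs :: "(nat \<times> nat) set \<Rightarrow> bool" where
  "valid_pairs D \<longleftrightarrow> finite D \<and> D \<subseteq> {(i, j). 1 \<le> i \<and> i < j} \<and>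
     (\<forall>i j i' j'. (i, j) \<in> D \<and> 1 \<le> i' \<and> i' < j' \<and> i' \<le> i \<and> j' \<le> j \<longrightarrow> (i', j') \<in> D)"

(* the monomial prod R_{ij}^{n(i,j)} applied to alpha *)
definition raise :: "(nat \<times> nat \<Rightarrow> nat) \<Rightarrow> int list \<Rightarrow> int list" where
  "raise n \<alpha> = map (\<lambda>m. \<alpha> ! (m - 1) + (\<Sum>j\<in>{m<..length \<alpha>}. int (n (m, j)))
                                 - (\<Sum>i\<in>{1..<m}. int (n (i, m)))) [1..<length \<alpha> + 1]"

(* the factor of R^D belonging to the pair p (in the variable R_p):
   (1 - R_p) * (1 + R_p)^(-1) if p in D, and (1 - R_p) otherwise;
   (1 + X)^(-1) is expanded as the geometric series sum (-1)^m X^m *)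
definition RD_factor :: "(nat \<times> nat) set \<Rightarrow> nat \<times> nat \<Rightarrow> int fps" where
  "RD_factor D p = (1 - fps_X) * (if p \<in> D then Abs_fps (\<lambda>m. (-1) ^ m) else 1)"

(* coefficient of the monomial prod_{p} R_p^{n p} in the expansion of R^D (length l) *)
definition RD_coeff :: "(nat \<times> nat) set \<Rightarrow> nat \<Rightarrow> (nat \<times> nat \<Rightarrow> nat) \<Rightarrow> int" where
  "RD_coeff D l n = (\<Prod>p\<in>pairs l. fps_nth (RD_factor D p) (n p))"

(* Only monomials n for which R^n alpha has
   no negative entry are summed: the others contribute sig_{...} = 0 by the convention
   sig^r_i = 0 for i < 0, and the remaining set is finite. *)
definition RD :: "(nat \<times> nat) set \<Rightarrow> (nat \<Rightarrow> int \<Rightarrow> 'a::comm_ring_1) \<Rightarrow> int list \<Rightarrow> 'a" where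
  "RD D sig \<alpha> =
     (\<Sum>n\<in>{n. (\<forall>p. p \<notin> pairs (length \<alpha>) \<longrightarrow> n p = 0) \<and> (\<forall>x\<in>set (raise n \<alpha>). 0 \<le> x)}.
        of_int (RD_coeff D (length \<alpha>) n) * smon sig (raise n \<alpha>))"

end

theory Submission
  imports Defs "HOL-Library.Disjoint_Sets"
begin

definition fD :: "nat \<Rightarrow> int" where "fD i = (if i = 0 then 1 else 2 * (-1)^i)"

lemma RD_factor_0: "fps_nth (RD_factor D p) 0 = 1"
  by (simp add: RD_factor_def algebra_simps)

lemma RD_factor_D: "p \<in> D \<Longrightarrow> fps_nth (RD_factor D p) i = fD i"
proof -
  assume "p \<in> D"
  have "RD_factor D p = Abs_fps (\<lambda>m. (-1) ^ m) - fps_X * Abs_fps (\<lambda>m. (-1) ^ m)"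
    using \<open>p \<in> D\<close> by (simp add: RD_factor_def algebra_simps)
  then show ?thesis
    by (cases i) (auto simp: fD_def fps_X_mult_nth)
qed

definition E :: "(nat \<times> nat \<Rightarrow> nat) \<Rightarrow> int list \<Rightarrow> nat \<Rightarrow> int" where
 "E n \<alpha> m = \<alpha> ! (m - 1) + (\<Sum>b\<in>{m<..length \<alpha>}. int (n (m, b))) - (\<Sum>a\<in>{1..<m}. int (n (a, m)))"

lemma length_raise[simp]: "length (raise n \<alpha>) = length \<alpha>"
  unfolding raise_def by (simp add: Suc_le_eq)

lemma raise_nth: "1 \<le> m \<Longrightarrow> m \<le> length \<alpha> \<Longrightarrow> raise n \<alpha> ! (m - 1) = E n \<alpha> m"
proof -
  assume "1 \<le> m" "m \<le> length \<alpha>"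
  then have "[1..<length \<alpha> + 1] ! (m - 1) = m" by (subst nth_upt) auto
  then show ?thesis using \<open>1 \<le> m\<close> \<open>m \<le> length \<alpha>\<close>
    by (simp add: raise_def E_def del: upt_Suc)
qed

lemma smon_raise: "smon \<sigma> (raise n \<alpha>) = (\<Prod>m\<in>{1..length \<alpha>}. \<sigma> m (E n \<alpha> m))"
  unfolding smon_def length_raise
  apply (rule prod.cong, rule refl)
  apply (subst raise_nth) apply auto done

lemma raise_E: "raise n \<alpha> = map (E n \<alpha>) [1..<length \<alpha> + 1]"
  by (simp add: raise_def E_def)

lemma raise_nonneg: "(\<forall>x\<in>set (raise n \<alpha>). 0 \<le> x) \<longleftrightarrow> (\<forall>m\<in>{1..length \<alpha>}. 0 \<le> E n \<alpha> m)"
  unfolding raise_E by (auto simp del: upt_Suc)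


definition Pot :: "int list \<Rightarrow> int" where
  "Pot \<alpha> = (\<Sum>m\<in>{1..length \<alpha>}. int m * \<alpha> ! (m - 1))"

lemma pairs_finite[simp]: "finite (pairs l)"
proof -
  have "pairs l \<subseteq> {1..l} \<times> {1..l}" by (auto simp: pairs_def)
  then show ?thesis by (rule finite_subset) auto
qed

lemma pairs_Sigma1: "pairs l = Sigma {1..l} (\<lambda>m. {m<..l})"
  by (auto simp: pairs_def)

lemma pairs_Sigma2: "pairs l = (\<lambda>(m, a). (a, m)) ` Sigma {1..l} (\<lambda>m. {1..<m})"
  by (auto simp: pairs_def image_iff)

lemma weighted_E:
  "(\<Sum>m\<in>{1..length \<alpha>}. int m * E n \<alpha> m) =
     Pot \<alpha> - (\<Sum>p\<in>pairs (length \<alpha>). int (n p) * (int (snd p) - int (fst p)))"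
proof -
  let ?l = "length \<alpha>"
  have o: "(\<Sum>m\<in>{1..?l}. int m * (\<Sum>b\<in>{m<..?l}. int (n (m, b)))) =
        (\<Sum>p\<in>pairs ?l. int (n p) * int (fst p))"
    unfolding pairs_Sigma1 sum_distrib_left
    apply (subst sum.Sigma) apply auto[2]
    apply (rule sum.cong) apply auto done
  have inj: "inj_on (\<lambda>(m, a). (a, m)) (Sigma {1..?l} (\<lambda>m. {1..<m}))"
    by (auto simp: inj_on_def)
  have i: "(\<Sum>m\<in>{1..?l}. int m * (\<Sum>a\<in>{1..<m}. int (n (a, m)))) =
        (\<Sum>p\<in>pairs ?l. int (n p) * int (snd p))"
    unfolding pairs_Sigma2 sum.reindex[OF inj] sum_distrib_left
    apply (subst sum.Sigma) apply auto[2]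
    apply (rule sum.cong) apply auto done
  have "(\<Sum>m\<in>{1..?l}. int m * E n \<alpha> m) =
      Pot \<alpha> + (\<Sum>m\<in>{1..?l}. int m * (\<Sum>b\<in>{m<..?l}. int (n (m, b))))
        - (\<Sum>m\<in>{1..?l}. int m * (\<Sum>a\<in>{1..<m}. int (n (a, m))))"
    unfolding E_def Pot_def by (simp add: algebra_simps sum.distrib sum_subtractf)
  also have "\<dots> = Pot \<alpha> - (\<Sum>p\<in>pairs ?l. int (n p) * (int (snd p) - int (fst p)))"
    unfolding o i by (simp add: algebra_simps sum_subtractf)
  finally show ?thesis .
qed

lemma pot_bound:
  assumes "\<forall>m\<in>{1..length \<alpha>}. 0 \<le> E n \<alpha> m"
  shows "int (\<Sum>p\<in>pairs (length \<alpha>). n p) \<le> Pot \<alpha>"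
proof -
  let ?l = "length \<alpha>"
  have "int (\<Sum>p\<in>pairs ?l. n p) = (\<Sum>p\<in>pairs ?l. int (n p))" by simp
  also have "\<dots> \<le> (\<Sum>p\<in>pairs ?l. int (n p) * (int (snd p) - int (fst p)))"
  proof (intro sum_mono)
    fix p assume "p \<in> pairs ?l"
    then have "1 \<le> int (snd p) - int (fst p)" by (auto simp: pairs_def)
    then have "int (n p) * 1 \<le> int (n p) * (int (snd p) - int (fst p))"
      by (intro mult_left_mono) auto
    then show "int (n p) \<le> int (n p) * (int (snd p) - int (fst p))" by simp
  qed
  also have "\<dots> = Pot \<alpha> - (\<Sum>m\<in>{1..?l}. int m * E n \<alpha> m)"
    using weighted_E[where \<alpha>=\<alpha> and n=n] by simp
  also have "\<dots> \<le> Pot \<alpha>"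
    using assms by (simp add: sum_nonneg del: atLeastAtMost_iff)
  finally show ?thesis .
qed


lemma finite_bounded_funs:
  assumes "finite P"
  shows "finite {n::'b \<Rightarrow> nat. (\<forall>p. p \<notin> P \<longrightarrow> n p = 0) \<and> (\<forall>p\<in>P. n p \<le> M)}"
    (is "finite ?S")
proof -
  have "inj_on (\<lambda>n. restrict n P) ?S"
    by (auto simp: inj_on_def restrict_def fun_eq_iff) (metis)
  moreover have "(\<lambda>n. restrict n P) ` ?S \<subseteq> PiE P (\<lambda>_. {0..M})"
    by auto
  moreover have "finite (PiE P (\<lambda>_. {0..M::nat}))"
    using assms by (intro finite_PiE) auto
  ultimately show ?thesis
    by (meson finite_imageD finite_subset)
qed

lemma finite_tot_funs:
  assumes "finite P"
  shows "finite {n::'b \<Rightarrow> nat. (\<forall>p. p \<notin> P \<longrightarrow> n p = 0) \<and> (\<Sum>p\<in>P. n p) \<le> M}"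
proof -
  have "{n::'b \<Rightarrow> nat. (\<forall>p. p \<notin> P \<longrightarrow> n p = 0) \<and> (\<Sum>p\<in>P. n p) \<le> M}
     \<subseteq> {n::'b \<Rightarrow> nat. (\<forall>p. p \<notin> P \<longrightarrow> n p = 0) \<and> (\<forall>p\<in>P. n p \<le> M)}"
    using assms by (auto intro: order.trans[OF member_le_sum])
  then show ?thesis using finite_bounded_funs[OF assms] by (rule finite_subset)
qed

definition NS :: "int list \<Rightarrow> (nat \<times> nat \<Rightarrow> nat) set" where
  "NS \<alpha> = {n. (\<forall>p. p \<notin> pairs (length \<alpha>) \<longrightarrow> n p = 0) \<and> (\<forall>x\<in>set (raise n \<alpha>). 0 \<le> x)}"

lemma NS_sub: "NS \<alpha> \<subseteq> {n. (\<forall>p. p \<notin> pairs (length \<alpha>) \<longrightarrow> n p = 0) \<and> (\<Sum>p\<in>pairs (length \<alpha>). n p) \<le> nat (Pot \<alpha>)}"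
proof
  fix n assume "n \<in> NS \<alpha>"
  then have E0: "\<forall>m\<in>{1..length \<alpha>}. 0 \<le> E n \<alpha> m" and "\<forall>p. p \<notin> pairs (length \<alpha>) \<longrightarrow> n p = 0"
    unfolding NS_def raise_nonneg by auto
  moreover have "int (\<Sum>p\<in>pairs (length \<alpha>). n p) \<le> Pot \<alpha>" using pot_bound[OF E0] .
  then have "(\<Sum>p\<in>pairs (length \<alpha>). n p) \<le> nat (Pot \<alpha>)" by linarith
  ultimately show "n \<in> {n. (\<forall>p. p \<notin> pairs (length \<alpha>) \<longrightarrow> n p = 0) \<and> (\<Sum>p\<in>pairs (length \<alpha>). n p) \<le> nat (Pot \<alpha>)}"
    by auto
qed

lemma NS_finite: "finite (NS \<alpha>)"
  by (rule finite_subset[OF NS_sub finite_tot_funs]) simp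

lemma RD_ext:
  fixes \<sigma> :: "nat \<Rightarrow> int \<Rightarrow> 'a::comm_ring_1"
  assumes fin: "finite B" and supp: "\<forall>n\<in>B. \<forall>p. p \<notin> pairs (length \<alpha>) \<longrightarrow> n p = 0"
    and sub: "NS \<alpha> \<subseteq> B" and signeg: "\<forall>r\<ge>1. \<forall>i<0. \<sigma> r i = 0"
  shows "RD D \<sigma> \<alpha> = (\<Sum>n\<in>B. of_int (RD_coeff D (length \<alpha>) n) * smon \<sigma> (raise n \<alpha>))"
  unfolding RD_def NS_def[symmetric]
proof (rule sum.mono_neutral_left[OF fin sub])
  show "\<forall>n\<in>B - NS \<alpha>. of_int (RD_coeff D (length \<alpha>) n) * smon \<sigma> (raise n \<alpha>) = 0"
  proof
    fix n assume n: "n \<in> B - NS \<alpha>"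
    then obtain m where m: "m \<in> {1..length \<alpha>}" "E n \<alpha> m < 0"
      using supp unfolding NS_def raise_nonneg by force
    then have "\<sigma> m (E n \<alpha> m) = 0" using signeg by auto
    then have "smon \<sigma> (raise n \<alpha>) = 0"
      unfolding smon_raise using m by (intro prod_zero) auto
    then show "of_int (RD_coeff D (length \<alpha>) n) * smon \<sigma> (raise n \<alpha>) = 0" by simp
  qed
qed


lemma sum_if_upd:
  fixes f :: "'b \<Rightarrow> 'c::ab_group_add"
  assumes "finite S"
  shows "(\<Sum>x\<in>S. if x = y then w else f x) = (\<Sum>x\<in>S. f x) + (if y \<in> S then w - f y else 0)"
proof (cases "y \<in> S")
  case True
  have "(\<Sum>x\<in>S. if x = y then w else f x) = w + (\<Sum>x\<in>S - {y}. if x = y then w else f x)"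
    using sum.remove[OF assms True, of "\<lambda>x. if x = y then w else f x"] by simp
  also have "(\<Sum>x\<in>S - {y}. if x = y then w else f x) = (\<Sum>x\<in>S - {y}. f x)"
    by (rule sum.cong) auto
  also have "(\<Sum>x\<in>S - {y}. f x) = (\<Sum>x\<in>S. f x) - f y"
    using sum.remove[OF assms True, of f] by simp
  finally show ?thesis using True by simp
next
  case False
  then have "(\<Sum>x\<in>S. if x = y then w else f x) = (\<Sum>x\<in>S. f x)"
    by (intro sum.cong) auto
  then show ?thesis using False by simp
qed

lemma E_upd:
  assumes q: "(a, b) \<in> pairs (length \<alpha>)"
  shows "E (n((a, b) := v)) \<alpha> m = E n \<alpha> m + (if m = a then int v - int (n (a, b)) else 0)
                                          - (if m = b then int v - int (n (a, b)) else 0)"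
proof -
  have ab: "1 \<le> a" "a < b" "b \<le> length \<alpha>" using q by (auto simp: pairs_def)
  have o: "(\<Sum>b'\<in>{m<..length \<alpha>}. int ((n((a, b) := v)) (m, b'))) =
      (\<Sum>b'\<in>{m<..length \<alpha>}. int (n (m, b'))) + (if m = a then int v - int (n (a, b)) else 0)"
  proof (cases "m = a")
    case True
    have "(\<Sum>b'\<in>{m<..length \<alpha>}. int ((n((a, b) := v)) (m, b'))) =
        (\<Sum>b'\<in>{m<..length \<alpha>}. if b' = b then int v else int (n (m, b')))"
      using True by (intro sum.cong) auto
    also have "\<dots> = (\<Sum>b'\<in>{m<..length \<alpha>}. int (n (m, b'))) + (int v - int (n (a, b)))"
      using True ab by (subst sum_if_upd) auto
    finally show ?thesis using True by simp
  next
    case False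
    then show ?thesis by (simp)
  qed
  have i: "(\<Sum>a'\<in>{1..<m}. int ((n((a, b) := v)) (a', m))) =
      (\<Sum>a'\<in>{1..<m}. int (n (a', m))) + (if m = b then int v - int (n (a, b)) else 0)"
  proof (cases "m = b")
    case True
    have "(\<Sum>a'\<in>{1..<m}. int ((n((a, b) := v)) (a', m))) =
        (\<Sum>a'\<in>{1..<m}. if a' = a then int v else int (n (a', m)))"
      using True by (intro sum.cong) auto
    also have "\<dots> = (\<Sum>a'\<in>{1..<m}. int (n (a', m))) + (int v - int (n (a, b)))"
      using True ab by (subst sum_if_upd) auto
    finally show ?thesis using True by simp
  next
    case False
    then show ?thesis by (simp)
  qed
  show ?thesis unfolding E_def o i by simp
qed

lemma E_upd':
  assumes q: "q \<in> pairs (length \<alpha>)"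
  shows "E (n(q := v)) \<alpha> m = E n \<alpha> m + (if m = fst q then int v - int (n q) else 0)
                                          - (if m = snd q then int v - int (n q) else 0)"
  using E_upd[of "fst q" "snd q" \<alpha> n v m] q by (cases q) simp

lemma coeff_upd:
  assumes q: "q \<in> pairs l" and n0: "n q = 0"
  shows "RD_coeff D l (n(q := v)) = RD_coeff D l n * fps_nth (RD_factor D q) v"
proof -
  have "RD_coeff D l (n(q := v)) = fps_nth (RD_factor D q) v *
        (\<Prod>p\<in>pairs l - {q}. fps_nth (RD_factor D p) (n p))"
    unfolding RD_coeff_def by (subst prod.remove[OF pairs_finite q]) (auto intro!: prod.cong)
  also have "(\<Prod>p\<in>pairs l - {q}. fps_nth (RD_factor D p) (n p)) = RD_coeff D l n"
    unfolding RD_coeff_def using prod.remove[OF pairs_finite q, of "\<lambda>p. fps_nth (RD_factor D p) (n p)"]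
    by (simp add: n0 RD_factor_0)
  finally show ?thesis by (simp only: mult.commute)
qed


definition fi :: "int \<Rightarrow> int" where "fi c = (if c < 0 then 0 else fD (nat c))"
definition pm :: "int \<Rightarrow> int" where "pm d = (if even d then 1 else -1)"
definition eps :: "int \<Rightarrow> int" where "eps d = (if even d then pm (d div 2) else 0)"

definition Tw :: "(int \<Rightarrow> 'a::comm_ring_1) \<Rightarrow> int \<Rightarrow> int \<Rightarrow> 'a" where
  "Tw c x y = (\<Sum>a\<in>{0..x+y}. of_int (fi (a - x)) * c a * c (x + y - a))"

definition Kf :: "(int \<Rightarrow> 'a::comm_ring_1) \<Rightarrow> int \<Rightarrow> int \<Rightarrow> 'a" where
  "Kf c x y = of_int (eps (x - y)) * Tw c ((x + y) div 2) ((x + y) div 2)"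

lemma pm_add: "pm (u + v) = pm u * pm v"
  by (auto simp: pm_def)

lemma pm_minus: "pm (- u) = pm u"
  by (auto simp: pm_def)

lemma pm_diff: "pm (u - v) = pm u * pm v"
  using pm_add[of u "-v"] pm_minus[of v] by simp

lemma pow_m1_pm: "(-1::int) ^ k = pm (int k)"
  by (auto simp: pm_def)

lemma fi_sym: "fi c + fi (- c) = 2 * pm c"
proof -
  consider "c < 0" | "c = 0" | "c > 0" by linarith
  then show ?thesis
  proof cases
    case 1
    then have "fi (- c) = 2 * pm c"
      by (simp add: fi_def fD_def pow_m1_pm pm_minus)
    then show ?thesis using 1 by (simp add: fi_def)
  next
    case 2 then show ?thesis by (simp add: fi_def fD_def pm_def)
  next
    case 3
    then have "fi c = 2 * pm c"
      by (simp add: fi_def fD_def pow_m1_pm)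
    then show ?thesis using 3 by (simp add: fi_def)
  qed
qed

lemma psi_antisym:
  fixes x y a :: int
  defines "N \<equiv> x + y"
  defines "\<psi> \<equiv> \<lambda>a. fi (a - x) + fi (a - y) - (if even N then 2 * eps (x - y) * fi (a - N div 2) else 0)"
  shows "\<psi> (N - a) + \<psi> a = 0"
proof -
  have s1: "fi (N - a - y) + fi (a - x) = 2 * pm (a - x)"
    using fi_sym[of "a - x"] by (simp add: N_def algebra_simps)
  have s2: "fi (N - a - x) + fi (a - y) = 2 * pm (a - y)"
    using fi_sym[of "a - y"] by (simp add: N_def algebra_simps)
  show ?thesis
  proof (cases "even N")
    case True
    define p where "p = N div 2"
    have Np: "N = 2 * p" using True by (simp add: p_def)
    have s3: "fi (N - a - p) + fi (a - p) = 2 * pm (a - p)"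
      using fi_sym[of "a - p"] by (simp add: Np algebra_simps)
    have e: "eps (x - y) = pm (x - p)"
    proof -
      have "x - y = 2 * (x - p)" using Np by (simp add: N_def)
      then have "(x - y) div 2 = x - p" "even (x - y)" by (simp, presburger)
      then show ?thesis unfolding eps_def by simp
    qed
    have "pm (a - y) = pm (a - x)"
    proof -
      have "a - y = (a - x) + 2 * (x - p)" using Np by (simp add: N_def)
      then have "pm (a - y) = pm (a - x) * pm (2 * (x - p))" by (simp only: pm_add)
      then show ?thesis by (simp add: pm_def)
    qed
    moreover have "pm (a - x) = pm (a - p) * pm (x - p)"
      using pm_diff[of "a - p" "x - p"] by simp
    ultimately have q1: "fi (N - (a + y)) = 2 * pm (a - p) * pm (x - p) - fi (a - x)"
        and q2: "fi (N - (a + x)) = 2 * pm (a - p) * pm (x - p) - fi (a - y)"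
        and q3: "fi (N - (a + p)) = 2 * pm (a - p) - fi (a - p)"
      using s1 s2 s3 by (simp_all add: algebra_simps)
    show ?thesis
      unfolding \<psi>_def using True e
      by (simp add: p_def[symmetric] q1 q2 q3 algebra_simps)
  next
    case False
    have "pm (a - y) = - pm (a - x)"
    proof -
      have "a - y = (a - x) + (x - y)" by simp
      moreover have "odd (x - y)" using False unfolding N_def by presburger
      ultimately have "pm (a - y) = pm (a - x) * pm (x - y)" by (simp only: pm_add)
      then show ?thesis using \<open>odd (x - y)\<close> by (simp add: pm_def)
    qed
    then show ?thesis
      unfolding \<psi>_def using False s1 s2 by (simp add: algebra_simps)
  qed
qed


lemma Tw_swap_sum:
  fixes c :: "int \<Rightarrow> 'a::comm_ring_1"
  shows "Tw c x y + Tw c y x = 2 * Kf c x y"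
proof -
  define N where "N = x + y"
  define \<psi> where "\<psi> = (\<lambda>a. fi (a - x) + fi (a - y) - (if even N then 2 * eps (x - y) * fi (a - N div 2) else 0))"
  have anti: "\<psi> (N - a) + \<psi> a = 0" for a
    unfolding \<psi>_def N_def by (rule psi_antisym[unfolded Let_def])
  define g where "g = (\<lambda>a. of_int (\<psi> a) * (c a * c (N - a)))"
  have main: "(\<Sum>a\<in>{0..N}. g a) = 0"
  proof -
    have "(\<Sum>a\<in>{0..N}. g a) = (\<Sum>a\<in>{a\<in>{0..N}. N - a \<noteq> a}. g a)"
    proof (rule sum.mono_neutral_right)
      show "\<forall>i\<in>{0..N} - {a \<in> {0..N}. N - a \<noteq> a}. g i = 0"
      proof
        fix i assume "i \<in> {0..N} - {a \<in> {0..N}. N - a \<noteq> a}"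
        then have "N - i = i" by auto
        then have "\<psi> i = 0" using anti[of i] by simp
        then show "g i = 0" by (simp add: g_def)
      qed
    qed auto
    also have "\<dots> = 0"
    proof (rule sum_involution_eq_0[where h = "\<lambda>a. N - a"])
      fix a assume "a \<in> {a \<in> {0..N}. N - a \<noteq> a}"
      have "g (N - a) + g a = of_int (\<psi> (N - a) + \<psi> a) * (c a * c (N - a))"
        by (simp add: g_def algebra_simps)
      then show "g (N - a) + g a = 0" using anti[of a] by simp
    qed auto
    finally show ?thesis .
  qed
  have t1: "Tw c x y = (\<Sum>a\<in>{0..N}. of_int (fi (a - x)) * (c a * c (N - a)))"
    unfolding Tw_def N_def by (simp add: mult.assoc)
  have t2: "Tw c y x = (\<Sum>a\<in>{0..N}. of_int (fi (a - y)) * (c a * c (N - a)))"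
    unfolding Tw_def N_def by (simp add: mult.assoc add.commute)
  have k: "2 * Kf c x y = (\<Sum>a\<in>{0..N}. of_int (if even N then 2 * eps (x - y) * fi (a - N div 2) else 0) * (c a * c (N - a)))"
  proof (cases "even N")
    case True
    then have NN: "N div 2 + N div 2 = N" by simp
    show ?thesis
      unfolding Kf_def Tw_def N_def[symmetric] NN using True
      by (simp add: sum_distrib_left algebra_simps)
  next
    case False
    then have "odd (x - y)" unfolding N_def by presburger
    then show ?thesis using False by (simp add: Kf_def eps_def)
  qed
  have "Tw c x y + Tw c y x - 2 * Kf c x y = (\<Sum>a\<in>{0..N}. g a)"
    unfolding t1 t2 k g_def \<psi>_def
    by (simp add: sum_subtractf[symmetric] sum.distrib[symmetric] algebra_simps)
  then show ?thesis using main by simp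
qed


lemma eps_minus: "eps (- d) = eps d"
proof (cases "even d")
  case True
  then obtain t where "d = 2 * t" by blast
  moreover have "- (2 * t) div 2 = - t" by simp
  ultimately show ?thesis by (simp add: eps_def pm_minus)
next
  case False
  then show ?thesis by (simp add: eps_def)
qed

lemma Kf_sym: "Kf c y x = Kf c x y"
proof -
  have "eps (y - x) = eps (x - y)"
    using eps_minus[of "x - y"] by simp
  then show ?thesis by (simp add: Kf_def add.commute)
qed

lemma Kf_diag: "Kf c x x = Tw c x x"
  by (simp add: Kf_def eps_def pm_def)

lemma alt_sum: "(\<Sum>a\<in>{0..n::nat}. (-1::int) ^ a) = (if even n then 1 else 0)"
  by (induction n) auto

lemma eps_shift: "eps (d + int m - 2 * int a) = eps (d + int m) * (-1) ^ a"
proof (cases "even (d + int m)")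
  case True
  then have "(d + int m - 2 * int a) div 2 = (d + int m) div 2 - int a" by auto
  moreover have "even (d + int m - 2 * int a)" using True by simp
  ultimately show ?thesis using True
    by (simp add: eps_def pm_diff pow_m1_pm)
next
  case False
  then have "odd (d + int m - 2 * int a)" by simp
  then show ?thesis using False by (simp add: eps_def)
qed

lemma G_zero: "(\<Sum>a\<in>{0..m}. fD a * fD (m - a) * (-1) ^ a) = (if m = 0 then 1 else 0)"
proof (cases m)
  case 0 then show ?thesis by (simp add: fD_def)
next
  case (Suc k)
  define f where "f = (\<lambda>a. fD a * fD (m - a) * (-1::int) ^ a)"
  have "(\<Sum>a\<in>{0..m}. f a) = (\<Sum>a\<in>{0..k}. f a) + f m"
    using Suc by simp
  also have "(\<Sum>a\<in>{0..k}. f a) = f 0 + (\<Sum>a\<in>{1..k}. f a)"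
    by (simp add: sum.atLeast_Suc_atMost)
  also have "(\<Sum>a\<in>{1..k}. f a) = (\<Sum>a\<in>{1..k}. 4 * (-1) ^ m * (-1) ^ a)"
  proof (rule sum.cong)
    fix a assume a: "a \<in> {1..k}"
    then have "m - a \<noteq> 0" "a \<noteq> 0" using Suc by auto
    moreover have "(-1::int) ^ a * (-1) ^ (m - a) = (-1) ^ m"
      using a Suc by (simp add: power_add[symmetric])
    moreover have "fD a = 2 * (-1) ^ a" "fD (m - a) = 2 * (-1) ^ (m - a)"
      using calculation by (simp_all add: fD_def)
    ultimately have "f a = 4 * ((-1) ^ a * (-1) ^ (m - a)) * (-1) ^ a"
      unfolding f_def by (simp add: algebra_simps)
    also have "\<dots> = 4 * (-1) ^ m * (-1) ^ a" using \<open>(-1::int) ^ a * (-1) ^ (m - a) = (-1) ^ m\<close> by simp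
    finally show "f a = 4 * (-1) ^ m * (-1) ^ a" .
  qed simp
  also have "\<dots> = 4 * (-1) ^ m * ((\<Sum>a\<in>{0..k}. (-1) ^ a) - 1)"
    by (simp add: sum_distrib_left[symmetric] sum.atLeast_Suc_atMost)
  finally have "(\<Sum>a\<in>{0..m}. f a) = f 0 + 4 * (-1) ^ m * ((if even k then 1 else 0) - 1) + f m"
    unfolding alt_sum by simp
  moreover have "f 0 = 2 * (-1) ^ m" "f m = 2"
    using Suc by (simp_all add: f_def fD_def)
  ultimately show ?thesis using Suc unfolding f_def by auto
qed

lemma S2: "(\<Sum>a\<in>{0..m}. fD a * fD (m - a) * eps (d + int m - 2 * int a)) = (if m = 0 then eps d else 0)"
proof -
  have "(\<Sum>a\<in>{0..m}. fD a * fD (m - a) * eps (d + int m - 2 * int a)) =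
      eps (d + int m) * (\<Sum>a\<in>{0..m}. fD a * fD (m - a) * (-1) ^ a)"
    by (simp only: eps_shift) (simp add: sum_distrib_left algebra_simps)
  then show ?thesis by (simp add: G_zero)
qed


definition Pp :: "nat \<Rightarrow> nat \<Rightarrow> (nat \<times> nat) set" where
  "Pp l j = pairs l - {(j, j + 1)}"

definition Bs :: "nat \<Rightarrow> nat \<Rightarrow> nat \<Rightarrow> (nat \<times> nat \<Rightarrow> nat) set" where
  "Bs l j M = {n. (\<forall>p. p \<notin> Pp l j \<longrightarrow> n p = 0) \<and> (\<Sum>p\<in>Pp l j. n p) \<le> M}"

definition rest :: "(nat \<Rightarrow> int \<Rightarrow> 'a::comm_ring_1) \<Rightarrow> int list \<Rightarrow> nat \<Rightarrow> (nat \<times> nat \<Rightarrow> nat) \<Rightarrow> 'a" where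
  "rest \<sigma> \<alpha> j n = (\<Prod>m\<in>{1..length \<alpha>} - {j, j + 1}. \<sigma> m (E n \<alpha> m))"

lemma Pp_finite[simp]: "finite (Pp l j)"
  by (simp add: Pp_def)

lemma Bs_finite: "finite (Bs l j M)"
  unfolding Bs_def by (rule finite_tot_funs) simp

lemma prod_split2:
  fixes j l :: nat
  assumes "1 \<le> j" "j + 1 \<le> l"
  shows "(\<Prod>m\<in>{1..l}. h m) = (\<Prod>m\<in>{1..l} - {j, j + 1}. h m) * h j * h (j + 1)"
proof -
  have "(\<Prod>m\<in>{1..l}. h m) = (\<Prod>m\<in>{1..l} - {j, j + 1}. h m) * (\<Prod>m\<in>{j, j+1}. h m)"
    by (rule prod.subset_diff) (use assms in auto)
  then show ?thesis by (simp add: mult.assoc)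
qed

lemma Tw_trunc:
  fixes cc :: "int \<Rightarrow> 'a::comm_ring_1"
  assumes cneg: "\<forall>i<0. cc i = 0" and yM: "y \<le> int M2"
  shows "(\<Sum>c\<in>{0..M2}. of_int (fD c) * cc (x + int c) * cc (y - int c)) = Tw cc x y"
proof -
  define g where "g = (\<lambda>a. of_int (fi (a - x)) * cc a * cc (x + y - a))"
  have inj: "inj_on (\<lambda>c. x + int c) {0..M2}" by (auto simp: inj_on_def)
  have img: "(\<lambda>c. x + int c) ` {0..M2} = {x..x + int M2}"
  proof
    show "{x..x + int M2} \<subseteq> (\<lambda>c. x + int c) ` {0..M2}"
    proof
      fix a assume "a \<in> {x..x + int M2}"
      then have "a = x + int (nat (a - x))" "nat (a - x) \<in> {0..M2}" by auto
      then show "a \<in> (\<lambda>c. x + int c) ` {0..M2}" by blast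
    qed
  qed auto
  have "(\<Sum>c\<in>{0..M2}. of_int (fD c) * cc (x + int c) * cc (y - int c)) = (\<Sum>c\<in>{0..M2}. g (x + int c))"
    by (intro sum.cong) (auto simp: g_def fi_def)
  also have "\<dots> = (\<Sum>a\<in>{x..x + int M2}. g a)"
    using sum.reindex[OF inj, of g] img by simp
  also have "\<dots> = (\<Sum>a\<in>{x..x + int M2} \<inter> {0..x+y}. g a)"
    by (rule sum.mono_neutral_right) (auto simp: g_def cneg)
  also have "\<dots> = (\<Sum>a\<in>{0..x+y}. g a)"
    using yM by (intro sum.mono_neutral_left) (auto simp: g_def fi_def)
  finally show ?thesis by (simp add: Tw_def g_def)
qed


lemma out_le_Pp:
  fixes n :: "nat \<times> nat \<Rightarrow> nat"
  assumes "1 \<le> m" "m \<noteq> j"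
  shows "(\<Sum>b\<in>{m<..l}. n (m, b)) \<le> (\<Sum>p\<in>Pp l j. n p)"
proof -
  have inj: "inj_on (\<lambda>b. (m, b)) {m<..l}" by (auto simp: inj_on_def)
  have "(\<Sum>b\<in>{m<..l}. n (m, b)) = (\<Sum>p\<in>(\<lambda>b. (m, b)) ` {m<..l}. n p)"
    using sum.reindex[OF inj, of n] by simp
  also have "\<dots> \<le> (\<Sum>p\<in>Pp l j. n p)"
    using assms by (intro sum_mono2) (simp, auto simp: Pp_def pairs_def)
  finally show ?thesis .
qed

lemma decomp:
  fixes \<sigma> :: "nat \<Rightarrow> int \<Rightarrow> 'a::comm_ring_1" and cc :: "int \<Rightarrow> 'a"
  assumes j1: "1 \<le> j" and jl: "j + 1 \<le> length \<alpha>"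
    and signeg: "\<forall>r\<ge>1. \<forall>i<0. \<sigma> r i = 0" and cneg: "\<forall>i<0. cc i = 0"
    and sj: "\<sigma> j = cc" and sj1: "\<sigma> (j + 1) = cc" and jD: "(j, j + 1) \<in> D"
    and MP: "Pot \<alpha> \<le> int M"
  shows "RD D \<sigma> \<alpha> = (\<Sum>n\<in>Bs (length \<alpha>) j M.
            of_int (RD_coeff D (length \<alpha>) n) * rest \<sigma> \<alpha> j n * Tw cc (E n \<alpha> j) (E n \<alpha> (j + 1)))"
proof -
  define l where "l = length \<alpha>"
  define q where "q = (j, j + 1)"
  define M2 where "M2 = M + nat \<bar>\<alpha> ! j\<bar>"
  define DM where "DM = {n. (\<forall>p. p \<notin> pairs l \<longrightarrow> n p = 0) \<and> (\<Sum>p\<in>Pp l j. n p) \<le> M \<and> n q \<le> M2}"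
  have qP: "q \<in> pairs l" using j1 jl by (auto simp: pairs_def q_def l_def)
  have qPp: "q \<notin> Pp l j" by (simp add: Pp_def q_def)
  have PpP: "Pp l j \<subseteq> pairs l" by (auto simp: Pp_def)
  have Bs0: "n q = 0" if "n \<in> Bs l j M" for n
    using qPp that unfolding Bs_def by blast
  have finDM: "finite DM"
  proof -
    have "DM \<subseteq> {n. (\<forall>p. p \<notin> pairs l \<longrightarrow> n p = 0) \<and> (\<forall>p\<in>pairs l. n p \<le> M + M2)}"
    proof (safe)
      fix n p assume n: "n \<in> DM" and p: "p \<in> pairs l"
      show "n p \<le> M + M2"
      proof (cases "p = q")
        case True then show ?thesis using n by (simp add: DM_def)
      next
        case False
        then have "p \<in> Pp l j" using p by (simp add: Pp_def q_def)
        then have "n p \<le> (\<Sum>p\<in>Pp l j. n p)" by (intro member_le_sum) auto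
        then show ?thesis using n by (simp add: DM_def)
      qed
    qed (auto simp: DM_def)
    then show ?thesis using finite_bounded_funs[OF pairs_finite] by (rule finite_subset)
  qed
  have NSsub: "NS \<alpha> \<subseteq> DM"
  proof
    fix n assume "n \<in> NS \<alpha>"
    then have supp: "\<forall>p. p \<notin> pairs l \<longrightarrow> n p = 0" and tot: "(\<Sum>p\<in>pairs l. n p) \<le> nat (Pot \<alpha>)"
      using NS_sub[of \<alpha>] by (auto simp: l_def)
    then have tot': "(\<Sum>p\<in>pairs l. n p) \<le> M" using MP by linarith
    have "(\<Sum>p\<in>Pp l j. n p) \<le> (\<Sum>p\<in>pairs l. n p)" using PpP by (intro sum_mono2) auto
    moreover have "n q \<le> (\<Sum>p\<in>pairs l. n p)" using qP by (intro member_le_sum) auto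
    ultimately show "n \<in> DM" using supp tot' by (auto simp: DM_def M2_def)
  qed
  have "RD D \<sigma> \<alpha> = (\<Sum>n\<in>DM. of_int (RD_coeff D l n) * smon \<sigma> (raise n \<alpha>))"
    unfolding l_def by (rule RD_ext[OF finDM _ NSsub signeg]) (auto simp: DM_def l_def)
  also have "\<dots> = (\<Sum>nc\<in>Bs l j M \<times> {0..M2}. of_int (RD_coeff D l ((fst nc)(q := snd nc))) * smon \<sigma> (raise ((fst nc)(q := snd nc)) \<alpha>))"
  proof -
    have inj: "inj_on (\<lambda>nc. (fst nc)(q := snd nc)) (Bs l j M \<times> {0..M2})"
    proof (rule inj_onI)
      fix x y assume x: "x \<in> Bs l j M \<times> {0..M2}" and y: "y \<in> Bs l j M \<times> {0..M2}"
        and eq: "(fst x)(q := snd x) = (fst y)(q := snd y)"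
      have n: "fst x \<in> Bs l j M" and n': "fst y \<in> Bs l j M" using x y by auto
      have "snd x = snd y" using fun_cong[OF eq, of q] by simp
      moreover have "fst x = fst y"
      proof
        fix p show "fst x p = fst y p"
        proof (cases "p = q")
          case True then show ?thesis using Bs0[OF n] Bs0[OF n'] by simp
        next
          case False then show ?thesis using fun_cong[OF eq, of p] by simp
        qed
      qed
      ultimately show "x = y" by (simp add: prod_eq_iff)
    qed
    have img: "(\<lambda>nc. (fst nc)(q := snd nc)) ` (Bs l j M \<times> {0..M2}) = DM"
    proof
      show "(\<lambda>nc. (fst nc)(q := snd nc)) ` (Bs l j M \<times> {0..M2}) \<subseteq> DM"
      proof
        fix z assume "z \<in> (\<lambda>nc. (fst nc)(q := snd nc)) ` (Bs l j M \<times> {0..M2})"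
        then obtain n c where n: "n \<in> Bs l j M" and c: "c \<in> {0..M2}" and z: "z = n(q := c)" by auto
        have "(\<Sum>p\<in>Pp l j. (n(q := c)) p) = (\<Sum>p\<in>Pp l j. n p)"
          using qPp by (intro sum.cong) auto
        then show "z \<in> DM" using n c qPp PpP qP unfolding DM_def Bs_def z by auto
      qed
    next
      show "DM \<subseteq> (\<lambda>nc. (fst nc)(q := snd nc)) ` (Bs l j M \<times> {0..M2})"
      proof
        fix n assume n: "n \<in> DM"
        have "(\<Sum>p\<in>Pp l j. (n(q := 0)) p) = (\<Sum>p\<in>Pp l j. n p)"
          using qPp by (intro sum.cong) auto
        then have "n(q := 0) \<in> Bs l j M" using n unfolding DM_def Bs_def Pp_def q_def by auto
        moreover have "n q \<in> {0..M2}" using n by (simp add: DM_def)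
        moreover have "n = (fst (n(q := 0), n q))(q := snd (n(q := 0), n q))" by simp
        ultimately show "n \<in> (\<lambda>nc. (fst nc)(q := snd nc)) ` (Bs l j M \<times> {0..M2})"
          by (metis (no_types, lifting) mem_Sigma_iff rev_image_eqI)
      qed
    qed
    show ?thesis using sum.reindex[OF inj] img by simp
  qed
  also have "\<dots> = (\<Sum>n\<in>Bs l j M. \<Sum>c\<in>{0..M2}. of_int (RD_coeff D l (n(q := c))) * smon \<sigma> (raise (n(q := c)) \<alpha>))"
    by (simp add: sum.cartesian_product split_def)
  also have "\<dots> = (\<Sum>n\<in>Bs l j M. of_int (RD_coeff D l n) * rest \<sigma> \<alpha> j n * Tw cc (E n \<alpha> j) (E n \<alpha> (j + 1)))"
  proof (rule sum.cong[OF refl])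
    fix n assume n: "n \<in> Bs l j M"
    have nq: "n q = 0" using Bs0[OF n] .
    define x where "x = E n \<alpha> j"
    define y where "y = E n \<alpha> (j + 1)"
    have yM: "y \<le> int M2"
    proof -
      have "y \<le> \<alpha> ! j + (\<Sum>b\<in>{j + 1<..l}. int (n (j + 1, b)))"
        unfolding y_def E_def l_def by (simp add: sum_nonneg)
      also have "(\<Sum>b\<in>{j + 1<..l}. int (n (j + 1, b))) = int (\<Sum>b\<in>{j + 1<..l}. n (j + 1, b))"
        by simp
      also have "(\<Sum>b\<in>{j + 1<..l}. n (j + 1, b)) \<le> (\<Sum>p\<in>Pp l j. n p)"
        by (rule out_le_Pp) auto
      also have "(\<Sum>p\<in>Pp l j. n p) \<le> M" using n by (simp add: Bs_def)
      finally show ?thesis by (simp add: M2_def)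
    qed
    have Eq: "E (n(q := c)) \<alpha> m = E n \<alpha> m + (if m = j then int c else 0) - (if m = j + 1 then int c else 0)" for c m
      using E_upd[of j "j + 1" \<alpha> n c m] qP nq by (simp add: q_def l_def)
    have sm: "smon \<sigma> (raise (n(q := c)) \<alpha>) = rest \<sigma> \<alpha> j n * (cc (x + int c) * cc (y - int c))" for c
    proof -
      have "smon \<sigma> (raise (n(q := c)) \<alpha>) = (\<Prod>m\<in>{1..l}. \<sigma> m (E (n(q := c)) \<alpha> m))"
        by (simp add: smon_raise l_def)
      also have "\<dots> = (\<Prod>m\<in>{1..l} - {j, j + 1}. \<sigma> m (E (n(q := c)) \<alpha> m)) * \<sigma> j (E (n(q := c)) \<alpha> j) * \<sigma> (j + 1) (E (n(q := c)) \<alpha> (j + 1))"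
        using j1 jl by (intro prod_split2) (auto simp: l_def)
      also have "(\<Prod>m\<in>{1..l} - {j, j + 1}. \<sigma> m (E (n(q := c)) \<alpha> m)) = rest \<sigma> \<alpha> j n"
        unfolding rest_def l_def by (intro prod.cong) (auto simp: Eq)
      also have "E (n(q := c)) \<alpha> j = x + int c" using Eq[of c j] by (simp add: x_def)
      also have "E (n(q := c)) \<alpha> (j + 1) = y - int c" using Eq[of c "j + 1"] by (simp add: y_def)
      finally show ?thesis by (simp only: sj sj1 mult.assoc)
    qed
    have co: "RD_coeff D l (n(q := c)) = RD_coeff D l n * fD c" for c
      using coeff_upd[where n=n and q=q and l=l and D=D and v=c, OF qP nq] RD_factor_D[OF jD] by (simp add: q_def)
    have "(\<Sum>c\<in>{0..M2}. of_int (RD_coeff D l (n(q := c))) * smon \<sigma> (raise (n(q := c)) \<alpha>)) =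
        of_int (RD_coeff D l n) * rest \<sigma> \<alpha> j n * (\<Sum>c\<in>{0..M2}. of_int (fD c) * cc (x + int c) * cc (y - int c))"
      by (simp add: sm co sum_distrib_left algebra_simps)
    also have "\<dots> = of_int (RD_coeff D l n) * rest \<sigma> \<alpha> j n * Tw cc x y"
      using Tw_trunc[OF cneg yM] by simp
    finally show "(\<Sum>c\<in>{0..M2}. of_int (RD_coeff D l (n(q := c))) * smon \<sigma> (raise (n(q := c)) \<alpha>)) =
        of_int (RD_coeff D l n) * rest \<sigma> \<alpha> j n * Tw cc (E n \<alpha> j) (E n \<alpha> (j + 1))"
      by (simp add: x_def y_def)
  qed
  finally show ?thesis by (simp add: l_def)
qed


definition tr :: "nat \<Rightarrow> nat \<Rightarrow> nat" where
  "tr j m = (if m = j then j + 1 else if m = j + 1 then j else m)"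

definition tp :: "nat \<Rightarrow> nat \<times> nat \<Rightarrow> nat \<times> nat" where
  "tp j p = (tr j (fst p), tr j (snd p))"

definition sw :: "nat \<Rightarrow> (nat \<times> nat \<Rightarrow> nat) \<Rightarrow> (nat \<times> nat \<Rightarrow> nat)" where
  "sw j n = (\<lambda>p. n (tp j p))"

lemma tr_tr[simp]: "tr j (tr j m) = m"
  by (simp add: tr_def)

lemma tp_tp[simp]: "tp j (tp j p) = p"
  by (simp add: tp_def)

lemma sw_sw[simp]: "sw j (sw j n) = n"
  by (simp add: sw_def)

lemma tr_bij: "j + 1 \<le> l \<Longrightarrow> 1 \<le> j \<Longrightarrow> bij_betw (tr j) {1..l} {1..l}"
  by (rule bij_betw_byWitness[where f' = "tr j"]) (auto simp: tr_def)

lemma tp_Pp: "j + 1 \<le> l \<Longrightarrow> 1 \<le> j \<Longrightarrow> p \<in> Pp l j \<Longrightarrow> tp j p \<in> Pp l j"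
  by (cases p) (auto simp: tp_def tr_def Pp_def pairs_def)

lemma tp_bij: "j + 1 \<le> l \<Longrightarrow> 1 \<le> j \<Longrightarrow> bij_betw (tp j) (Pp l j) (Pp l j)"
  by (rule bij_betw_byWitness[where f' = "tp j"]) (auto simp: tp_Pp)

lemma E_full:
  assumes supp: "\<forall>p. p \<notin> pairs (length \<alpha>) \<longrightarrow> n p = 0" and m: "m \<in> {1..length \<alpha>}"
  shows "E n \<alpha> m = \<alpha> ! (m - 1) + (\<Sum>b\<in>{1..length \<alpha>}. int (n (m, b))) - (\<Sum>a\<in>{1..length \<alpha>}. int (n (a, m)))"
proof -
  have "(\<Sum>b\<in>{m<..length \<alpha>}. int (n (m, b))) = (\<Sum>b\<in>{1..length \<alpha>}. int (n (m, b)))"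
    using m supp by (intro sum.mono_neutral_left) (auto simp: pairs_def)
  moreover have "(\<Sum>a\<in>{1..<m}. int (n (a, m))) = (\<Sum>a\<in>{1..length \<alpha>}. int (n (a, m)))"
    using m supp by (intro sum.mono_neutral_left) (auto simp: pairs_def)
  ultimately show ?thesis by (simp add: E_def)
qed

lemma sw_supp:
  assumes "j + 1 \<le> l" "1 \<le> j" "\<forall>p. p \<notin> Pp l j \<longrightarrow> n p = 0"
  shows "\<forall>p. p \<notin> Pp l j \<longrightarrow> sw j n p = 0"
proof (intro allI impI)
  fix p assume "p \<notin> Pp l j"
  then have "tp j p \<notin> Pp l j" using tp_Pp[OF assms(1,2), of "tp j p"] by auto
  then show "sw j n p = 0" using assms(3) unfolding sw_def by blast
qed

lemma sw_E:
  assumes jl: "j + 1 \<le> length \<alpha>" and j1: "1 \<le> j"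
    and supp: "\<forall>p. p \<notin> Pp (length \<alpha>) j \<longrightarrow> n p = 0"
    and len: "length \<alpha>' = length \<alpha>"
    and a': "\<forall>m\<in>{1..length \<alpha>}. \<alpha>' ! (m - 1) = \<alpha> ! (tr j m - 1)"
    and m: "m \<in> {1..length \<alpha>}"
  shows "E (sw j n) \<alpha>' m = E n \<alpha> (tr j m)"
proof -
  let ?l = "length \<alpha>"
  have suppP: "\<forall>p. p \<notin> pairs ?l \<longrightarrow> n p = 0" using supp by (auto simp: Pp_def)
  have suppP': "\<forall>p. p \<notin> pairs (length \<alpha>') \<longrightarrow> sw j n p = 0"
    using sw_supp[OF jl j1 supp] len by (auto simp: Pp_def)
  have tm: "tr j m \<in> {1..?l}" using m jl j1 by (auto simp: tr_def)
  have b: "(\<Sum>b\<in>{1..?l}. int (n (tr j m, tr j b))) = (\<Sum>b\<in>{1..?l}. int (n (tr j m, b)))"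
    using sum.reindex_bij_betw[OF tr_bij[OF jl j1], of "\<lambda>b. int (n (tr j m, b))"] by simp
  have a: "(\<Sum>a\<in>{1..?l}. int (n (tr j a, tr j m))) = (\<Sum>a\<in>{1..?l}. int (n (a, tr j m)))"
    using sum.reindex_bij_betw[OF tr_bij[OF jl j1], of "\<lambda>a. int (n (a, tr j m))"] by simp
  have "E (sw j n) \<alpha>' m = \<alpha>' ! (m - 1) + (\<Sum>b\<in>{1..?l}. int (sw j n (m, b))) - (\<Sum>a\<in>{1..?l}. int (sw j n (a, m)))"
    using E_full[OF suppP'] m len by simp
  also have "\<dots> = E n \<alpha> (tr j m)"
    using E_full[OF suppP tm] a' m b a by (simp add: sw_def tp_def)
  finally show ?thesis .
qed

lemma sw_Bs:
  assumes "j + 1 \<le> l" "1 \<le> j" "n \<in> Bs l j M"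
  shows "sw j n \<in> Bs l j M"
proof -
  have "(\<Sum>p\<in>Pp l j. sw j n p) = (\<Sum>p\<in>Pp l j. n p)"
    using sum.reindex_bij_betw[OF tp_bij[OF assms(1,2)], of n] by (simp add: sw_def)
  then show ?thesis using sw_supp[OF assms(1,2)] assms(3) by (auto simp: Bs_def)
qed

lemma sw_coeff:
  assumes jl: "j + 1 \<le> l" and j1: "1 \<le> j" and n: "n \<in> Bs l j M"
    and Dsym: "\<forall>p\<in>Pp l j. (tp j p \<in> D \<longleftrightarrow> p \<in> D)"
  shows "RD_coeff D l (sw j n) = RD_coeff D l n"
proof -
  let ?q = "(j, j + 1)"
  have qP: "?q \<in> pairs l" using jl j1 by (auto simp: pairs_def)
  have PI: "pairs l = insert ?q (Pp l j)" using qP by (auto simp: Pp_def)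
  have nq: "n ?q = 0" using n by (auto simp: Bs_def Pp_def)
  have swq: "sw j n ?q = 0" using n by (auto simp: Bs_def Pp_def sw_def tp_def tr_def pairs_def)
  have RDf: "RD_factor D (tp j p) = RD_factor D p" if "p \<in> Pp l j" for p
    using Dsym that by (simp add: RD_factor_def)
  have "(\<Prod>p\<in>Pp l j. fps_nth (RD_factor D p) (sw j n p)) = (\<Prod>p\<in>Pp l j. fps_nth (RD_factor D (tp j p)) (n (tp j p)))"
    by (intro prod.cong) (auto simp: RDf sw_def)
  also have "\<dots> = (\<Prod>p\<in>Pp l j. fps_nth (RD_factor D p) (n p))"
    using prod.reindex_bij_betw[OF tp_bij[OF jl j1], of "\<lambda>p. fps_nth (RD_factor D p) (n p)"] by simp
  moreover have qPp: "?q \<notin> Pp l j" by (simp add: Pp_def)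
  ultimately show ?thesis
    unfolding RD_coeff_def PI using nq swq by (simp add: prod.insert[OF Pp_finite qPp] RD_factor_0)
qed


lemma sw_rest:
  assumes jl: "j + 1 \<le> length \<alpha>" and j1: "1 \<le> j"
    and supp: "\<forall>p. p \<notin> Pp (length \<alpha>) j \<longrightarrow> n p = 0"
    and len: "length \<alpha>' = length \<alpha>"
    and a': "\<forall>m\<in>{1..length \<alpha>}. \<alpha>' ! (m - 1) = \<alpha> ! (tr j m - 1)"
  shows "rest \<sigma> \<alpha>' j (sw j n) = rest \<sigma> \<alpha> j n"
  unfolding rest_def len
proof (rule prod.cong[OF refl])
  fix m assume m: "m \<in> {1..length \<alpha>} - {j, j + 1}"
  then have "tr j m = m" by (auto simp: tr_def)
  then show "\<sigma> m (E (sw j n) \<alpha>' m) = \<sigma> m (E n \<alpha> m)"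
    using sw_E[OF jl j1 supp len a', of m] m by simp
qed

lemma sw_sum:
  fixes \<sigma> :: "nat \<Rightarrow> int \<Rightarrow> 'a::comm_ring_1" and G :: "int \<Rightarrow> int \<Rightarrow> 'a"
  assumes jl: "j + 1 \<le> length \<alpha>" and j1: "1 \<le> j"
    and len: "length \<alpha>' = length \<alpha>"
    and a': "\<forall>m\<in>{1..length \<alpha>}. \<alpha>' ! (m - 1) = \<alpha> ! (tr j m - 1)"
    and Dsym: "\<forall>p\<in>Pp (length \<alpha>) j. (tp j p \<in> D \<longleftrightarrow> p \<in> D)"
  shows "(\<Sum>n\<in>Bs (length \<alpha>) j M. of_int (RD_coeff D (length \<alpha>) n) * rest \<sigma> \<alpha>' j n * G (E n \<alpha>' j) (E n \<alpha>' (j + 1)))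
       = (\<Sum>n\<in>Bs (length \<alpha>) j M. of_int (RD_coeff D (length \<alpha>) n) * rest \<sigma> \<alpha> j n * G (E n \<alpha> (j + 1)) (E n \<alpha> j))"
proof -
  let ?l = "length \<alpha>"
  have bij: "bij_betw (sw j) (Bs ?l j M) (Bs ?l j M)"
    by (rule bij_betw_byWitness[where f' = "sw j"]) (auto simp: sw_Bs[OF jl j1])
  have "(\<Sum>n\<in>Bs ?l j M. of_int (RD_coeff D ?l n) * rest \<sigma> \<alpha>' j n * G (E n \<alpha>' j) (E n \<alpha>' (j + 1)))
      = (\<Sum>n\<in>Bs ?l j M. of_int (RD_coeff D ?l (sw j n)) * rest \<sigma> \<alpha>' j (sw j n) * G (E (sw j n) \<alpha>' j) (E (sw j n) \<alpha>' (j + 1)))"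
    using sum.reindex_bij_betw[OF bij, of "\<lambda>n. of_int (RD_coeff D ?l n) * rest \<sigma> \<alpha>' j n * G (E n \<alpha>' j) (E n \<alpha>' (j + 1))"]
    by simp
  also have "\<dots> = (\<Sum>n\<in>Bs ?l j M. of_int (RD_coeff D ?l n) * rest \<sigma> \<alpha> j n * G (E n \<alpha> (j + 1)) (E n \<alpha> j))"
  proof (rule sum.cong[OF refl])
    fix n assume n: "n \<in> Bs ?l j M"
    then have supp: "\<forall>p. p \<notin> Pp ?l j \<longrightarrow> n p = 0" by (simp add: Bs_def)
    have e1: "E (sw j n) \<alpha>' j = E n \<alpha> (j + 1)"
      using sw_E[OF jl j1 supp len a', of j] jl j1 by (simp add: tr_def)
    have e2: "E (sw j n) \<alpha>' (j + 1) = E n \<alpha> j"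
      using sw_E[OF jl j1 supp len a', of "j + 1"] jl j1 by (simp add: tr_def)
    show "of_int (RD_coeff D ?l (sw j n)) * rest \<sigma> \<alpha>' j (sw j n) * G (E (sw j n) \<alpha>' j) (E (sw j n) \<alpha>' (j + 1)) =
        of_int (RD_coeff D ?l n) * rest \<sigma> \<alpha> j n * G (E n \<alpha> (j + 1)) (E n \<alpha> j)"
      by (simp only: sw_coeff[OF jl j1 n Dsym] sw_rest[OF jl j1 supp len a'] e1 e2)
  qed
  finally show ?thesis .
qed


definition wt :: "(nat \<times> nat) set \<Rightarrow> (nat \<Rightarrow> int \<Rightarrow> 'a::comm_ring_1) \<Rightarrow> (int \<Rightarrow> 'a) \<Rightarrow> int list \<Rightarrow> nat \<Rightarrow> (nat \<times> nat \<Rightarrow> nat) \<Rightarrow> 'a" where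
  "wt D \<sigma> cc \<alpha> j n = of_int (RD_coeff D (length \<alpha>) n) * rest \<sigma> \<alpha> j n * Kf cc (E n \<alpha> j) (E n \<alpha> (j + 1))"

definition Z :: "nat \<Rightarrow> nat set \<Rightarrow> (nat \<times> nat \<Rightarrow> nat) set" where
  "Z j H = {n. \<forall>h\<in>H. n (h, j) = 0 \<and> n (h, j + 1) = 0}"

lemma sum_upd_nat:
  fixes f :: "'b \<Rightarrow> nat"
  assumes "finite P" "q \<in> P"
  shows "(\<Sum>p\<in>P. (f(q := v)) p) + f q = (\<Sum>p\<in>P. f p) + v"
proof -
  have "(\<Sum>p\<in>P. (f(q := v)) p) = v + (\<Sum>p\<in>P - {q}. (f(q := v)) p)"
    using sum.remove[OF assms, of "f(q := v)"] by simp
  also have "(\<Sum>p\<in>P - {q}. (f(q := v)) p) = (\<Sum>p\<in>P - {q}. f p)"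
    by (intro sum.cong) auto
  finally show ?thesis using sum.remove[OF assms, of f] by simp
qed

lemma rest_cong:
  assumes "\<forall>m\<in>{1..length \<alpha>} - {j, j + 1}. E n \<alpha> m = E n' \<alpha> m"
  shows "rest \<sigma> \<alpha> j n = rest \<sigma> \<alpha> j n'"
  unfolding rest_def using assms by (intro prod.cong) auto


lemma sum_Sigma':
  assumes "finite A" "\<forall>x\<in>A. finite (B x)"
  shows "(\<Sum>z\<in>Sigma A B. f z) = (\<Sum>x\<in>A. \<Sum>y\<in>B x. f (x, y))"
  using assms by (subst sum.Sigma) (auto simp: split_def)

lemma L_step:
  fixes \<sigma> :: "nat \<Rightarrow> int \<Rightarrow> 'a::comm_ring_1" and cc :: "int \<Rightarrow> 'a"
  assumes j1: "1 \<le> j" and jl: "j + 1 \<le> length \<alpha>" and h1: "1 \<le> h" and hj: "h < j" and hH: "h \<notin> H"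
    and D1: "(h, j) \<in> D" and D2: "(h, j + 1) \<in> D"
  shows "(\<Sum>n\<in>Bs (length \<alpha>) j M \<inter> Z j H. wt D \<sigma> cc \<alpha> j n) =
         (\<Sum>n\<in>Bs (length \<alpha>) j M \<inter> Z j (insert h H). wt D \<sigma> cc \<alpha> j n)"
proof -
  define l where "l = length \<alpha>"
  define q1 where "q1 = (h, j)"
  define q2 where "q2 = (h, j + 1)"
  define S where "S = Bs l j M \<inter> Z j H"
  define S0 where "S0 = Bs l j M \<inter> Z j (insert h H)"
  define tot where "tot = (\<lambda>n::nat\<times>nat\<Rightarrow>nat. \<Sum>p\<in>Pp l j. n p)"
  define T where "T = Sigma S0 (\<lambda>\<nu>. Sigma {0..M - tot \<nu>} (\<lambda>m. {0..m}))"
  define \<Phi> where "\<Phi> = (\<lambda>x::(nat\<times>nat\<Rightarrow>nat)\<times>nat\<times>nat. (fst x)(q1 := snd (snd x), q2 := fst (snd x) - snd (snd x)))"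
  have q1P: "q1 \<in> Pp l j" and q2P: "q2 \<in> Pp l j"
    using h1 hj jl by (auto simp: q1_def q2_def Pp_def pairs_def l_def)
  have q12: "q1 \<noteq> q2" by (simp add: q1_def q2_def)
  have S0z: "\<nu> q1 = 0" "\<nu> q2 = 0" if "\<nu> \<in> S0" for \<nu>
    using that by (auto simp: S0_def Z_def q1_def q2_def)
  have Bsupp: "\<nu> p = 0" if "\<nu> \<in> Bs l j M" "p \<notin> Pp l j" for \<nu> p
    using that unfolding Bs_def by blast
  have Btot: "tot \<nu> \<le> M" if "\<nu> \<in> Bs l j M" for \<nu>
    using that unfolding Bs_def tot_def by blast
  have tot_upd: "tot (\<nu>(q1 := a, q2 := b)) = tot \<nu> + a + b" if "\<nu> q1 = 0" "\<nu> q2 = 0" for \<nu> a b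
  proof -
    have "tot (\<nu>(q1 := a)) + \<nu> q1 = tot \<nu> + a"
      unfolding tot_def by (rule sum_upd_nat[OF Pp_finite q1P])
    moreover have "tot ((\<nu>(q1 := a))(q2 := b)) + (\<nu>(q1 := a)) q2 = tot (\<nu>(q1 := a)) + b"
      unfolding tot_def by (rule sum_upd_nat[OF Pp_finite q2P])
    ultimately show ?thesis using that q12 by simp
  qed
  have finS0: "finite S0"
    unfolding S0_def using Bs_finite by blast
  have inj: "inj_on \<Phi> T"
  proof (rule inj_onI)
    fix x y assume x: "x \<in> T" and y: "y \<in> T" and eq: "\<Phi> x = \<Phi> y"
    obtain \<nu> m a where xx: "x = (\<nu>, m, a)" by (metis prod_cases3)
    obtain \<nu>' m' a' where yy: "y = (\<nu>', m', a')" by (metis prod_cases3)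
    have \<nu>: "\<nu> \<in> S0" "a \<le> m" and \<nu>': "\<nu>' \<in> S0" "a' \<le> m'" using x y by (auto simp: T_def xx yy)
    have "a = a'" using fun_cong[OF eq, of q1] q12 by (simp add: \<Phi>_def xx yy)
    moreover have "m - a = m' - a'" using fun_cong[OF eq, of q2] by (simp add: \<Phi>_def xx yy)
    ultimately have "m = m'" using \<nu>(2) \<nu>'(2) by linarith
    moreover have "\<nu> = \<nu>'"
    proof
      fix p show "\<nu> p = \<nu>' p"
      proof (cases "p = q1 \<or> p = q2")
        case True then show ?thesis using S0z[OF \<nu>(1)] S0z[OF \<nu>'(1)] by auto
      next
        case False then show ?thesis using fun_cong[OF eq, of p] by (simp add: \<Phi>_def xx yy)
      qed
    qed
    ultimately show "x = y" using \<open>a = a'\<close> by (simp add: xx yy)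
  qed
  have img: "\<Phi> ` T = S"
  proof
    show "\<Phi> ` T \<subseteq> S"
    proof
      fix z assume "z \<in> \<Phi> ` T"
      then obtain \<nu> m a where \<nu>: "\<nu> \<in> S0" and m: "m \<le> M - tot \<nu>" and a: "a \<le> m" and z: "z = \<Phi> (\<nu>, m, a)"
        by (auto simp: T_def)
      have zz: "z = \<nu>(q1 := a, q2 := m - a)" by (simp add: z \<Phi>_def)
      have nB: "\<nu> \<in> Bs l j M" using \<nu> by (simp add: S0_def)
      have "tot z = tot \<nu> + a + (m - a)" unfolding zz using tot_upd S0z[OF \<nu>] by simp
      also have "\<dots> \<le> M" using m a Btot[OF nB] by linarith
      finally have tz: "tot z \<le> M" .
      have sz: "\<forall>p. p \<notin> Pp l j \<longrightarrow> z p = 0"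
        using Bsupp[OF nB] q1P q2P unfolding zz by auto
      have "z \<in> Z j H"
        using \<nu> hH unfolding zz S0_def Z_def q1_def q2_def by auto
      then show "z \<in> S" using tz sz by (simp add: S_def Bs_def tot_def)
    qed
  next
    show "S \<subseteq> \<Phi> ` T"
    proof
      fix n assume n: "n \<in> S"
      define \<nu> where "\<nu> = n(q1 := 0, q2 := 0)"
      have nB: "n \<in> Bs l j M" using n by (simp add: S_def)
      have \<nu>z: "\<nu> q1 = 0" "\<nu> q2 = 0" by (simp_all add: \<nu>_def)
      have nn: "n = \<nu>(q1 := n q1, q2 := n q2)" by (auto simp: \<nu>_def)
      have tn: "tot n = tot \<nu> + n q1 + n q2" using tot_upd[OF \<nu>z, of "n q1" "n q2"] nn by simp
      have "\<nu> \<in> S0"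
      proof -
        have "\<forall>p. p \<notin> Pp l j \<longrightarrow> \<nu> p = 0" using Bsupp[OF nB] by (auto simp: \<nu>_def)
        moreover have "tot \<nu> \<le> M" using tn Btot[OF nB] by linarith
        moreover have "\<nu> \<in> Z j (insert h H)"
          using n unfolding \<nu>_def S_def Z_def q1_def q2_def by auto
        ultimately show ?thesis by (simp add: S0_def Bs_def tot_def)
      qed
      moreover have "n q1 + n q2 \<le> M - tot \<nu>" using tn Btot[OF nB] by linarith
      moreover have "\<Phi> (\<nu>, n q1 + n q2, n q1) = n"
        by (simp add: \<Phi>_def) (metis nn)
      ultimately show "n \<in> \<Phi> ` T"
        unfolding T_def by (metis (no_types, lifting) SigmaI atLeastAtMost_iff image_eqI le_add1 zero_le)
    qed
  qed
  have "(\<Sum>n\<in>S. wt D \<sigma> cc \<alpha> j n) = (\<Sum>x\<in>T. wt D \<sigma> cc \<alpha> j (\<Phi> x))"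
    using sum.reindex[OF inj, of "wt D \<sigma> cc \<alpha> j"] img by simp
  also have "\<dots> = (\<Sum>\<nu>\<in>S0. \<Sum>m\<in>{0..M - tot \<nu>}. \<Sum>a\<in>{0..m}. wt D \<sigma> cc \<alpha> j (\<Phi> (\<nu>, m, a)))"
    unfolding T_def using finS0 by (simp add: sum_Sigma')
  also have "\<dots> = (\<Sum>\<nu>\<in>S0. wt D \<sigma> cc \<alpha> j \<nu>)"
  proof (rule sum.cong[OF refl])
    fix \<nu> assume \<nu>: "\<nu> \<in> S0"
    note z = S0z[OF \<nu>]
    define x where "x = E \<nu> \<alpha> j"
    define y where "y = E \<nu> \<alpha> (j + 1)"
    define C where "C = (\<lambda>m::nat. of_int (RD_coeff D l \<nu>) * rest \<sigma> \<alpha> j (\<nu>(q1 := m)) *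
                             Tw cc ((x + y - int m) div 2) ((x + y - int m) div 2))"
    have q1p: "q1 \<in> pairs l" and q2p: "q2 \<in> pairs l" using q1P q2P by (auto simp: Pp_def)
    have tmq: "wt D \<sigma> cc \<alpha> j (\<Phi> (\<nu>, m, a)) = C m * of_int (fD a * fD (m - a) * eps ((x - y) + int m - 2 * int a))"
      if a: "a \<le> m" for m a
    proof -
      have \<Phi>e: "\<Phi> (\<nu>, m, a) = (\<nu>(q1 := a))(q2 := m - a)" by (simp add: \<Phi>_def)
      have v2: "(\<nu>(q1 := a)) q2 = 0" using z q12 by simp
      have E1: "E (\<nu>(q1 := a)) \<alpha> m' = E \<nu> \<alpha> m' + (if m' = h then int a else 0) - (if m' = j then int a else 0)" for m'
        using E_upd[of h j \<alpha> \<nu> a m'] q1p z hj by (simp add: q1_def l_def)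
      have E2a: "E (\<Phi> (\<nu>, m, a)) \<alpha> m' = E (\<nu>(q1 := a)) \<alpha> m' + (if m' = h then int (m - a) else 0)
                   - (if m' = j + 1 then int (m - a) else 0)" for m'
        using E_upd'[OF q2p[unfolded l_def], of "\<nu>(q1 := a)" "m - a" m', unfolded v2] unfolding \<Phi>e
        by (simp add: q2_def)
      have E2: "E (\<Phi> (\<nu>, m, a)) \<alpha> m' = E \<nu> \<alpha> m' + (if m' = h then int m else 0) - (if m' = j then int a else 0)
                   - (if m' = j + 1 then int m - int a else 0)" for m'
        unfolding E2a E1 using a hj by (auto simp: of_nat_diff)
      have Em: "E (\<nu>(q1 := m)) \<alpha> m' = E \<nu> \<alpha> m' + (if m' = h then int m else 0) - (if m' = j then int m else 0)" for m'
        using E_upd[of h j \<alpha> \<nu> m m'] q1p z hj by (simp add: q1_def l_def)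
      have co: "RD_coeff D l (\<Phi> (\<nu>, m, a)) = RD_coeff D l \<nu> * fD a * fD (m - a)"
        unfolding \<Phi>e
        using coeff_upd[where n="\<nu>(q1 := a)" and q=q2 and l=l and D=D and v="m - a", OF q2p v2]
              coeff_upd[where n="\<nu>" and q=q1 and l=l and D=D and v=a, OF q1p z(1)]
              RD_factor_D[OF D1] RD_factor_D[OF D2]
        by (simp add: q1_def q2_def)
      have re: "rest \<sigma> \<alpha> j (\<Phi> (\<nu>, m, a)) = rest \<sigma> \<alpha> j (\<nu>(q1 := m))"
        by (rule rest_cong) (auto simp: E2 Em)
      have ej: "E (\<Phi> (\<nu>, m, a)) \<alpha> j = x - int a" using hj by (simp add: E2 x_def)
      have ej1: "E (\<Phi> (\<nu>, m, a)) \<alpha> (j + 1) = y - (int m - int a)" using hj by (simp add: E2 y_def)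
      have kf: "Kf cc (x - int a) (y - (int m - int a)) =
           of_int (eps ((x - y) + int m - 2 * int a)) * Tw cc ((x + y - int m) div 2) ((x + y - int m) div 2)"
        unfolding Kf_def by (simp add: algebra_simps)
      show ?thesis
        unfolding wt_def C_def l_def[symmetric] co re ej ej1 kf by (simp add: algebra_simps)
    qed
    have "(\<Sum>m\<in>{0..M - tot \<nu>}. \<Sum>a\<in>{0..m}. wt D \<sigma> cc \<alpha> j (\<Phi> (\<nu>, m, a))) =
        (\<Sum>m\<in>{0..M - tot \<nu>}. C m * of_int (\<Sum>a\<in>{0..m}. fD a * fD (m - a) * eps ((x - y) + int m - 2 * int a)))"
      by (intro sum.cong refl) (simp add: tmq sum_distrib_left)
    also have "\<dots> = (\<Sum>m\<in>{0..M - tot \<nu>}. if m = 0 then C 0 * of_int (eps (x - y)) else 0)"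
      by (intro sum.cong refl) (simp add: S2)
    also have "\<dots> = C 0 * of_int (eps (x - y))"
      by (simp add: sum.delta)
    also have "\<dots> = wt D \<sigma> cc \<alpha> j \<nu>"
    proof -
      have "\<nu>(q1 := 0) = \<nu>" using z by auto
      then show ?thesis unfolding C_def wt_def Kf_def l_def x_def y_def by (simp add: algebra_simps)
    qed
    finally show "(\<Sum>m\<in>{0..M - tot \<nu>}. \<Sum>a\<in>{0..m}. wt D \<sigma> cc \<alpha> j (\<Phi> (\<nu>, m, a))) = wt D \<sigma> cc \<alpha> j \<nu>" .
  qed
  finally show ?thesis by (simp add: S_def S0_def l_def)
qed


lemma L_cancel:
  fixes \<sigma> :: "nat \<Rightarrow> int \<Rightarrow> 'a::comm_ring_1" and cc :: "int \<Rightarrow> 'a"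
  assumes j1: "1 \<le> j" and jl: "j + 1 \<le> length \<alpha>"
    and fin: "finite H" and Hsub: "H \<subseteq> {1..<j}" and HD: "\<forall>h\<in>H. (h, j) \<in> D \<and> (h, j + 1) \<in> D"
  shows "(\<Sum>n\<in>Bs (length \<alpha>) j M. wt D \<sigma> cc \<alpha> j n) = (\<Sum>n\<in>Bs (length \<alpha>) j M \<inter> Z j H. wt D \<sigma> cc \<alpha> j n)"
  using fin Hsub HD
proof (induction H rule: finite_induct)
  case empty
  then show ?case by (simp add: Z_def)
next
  case (insert h F)
  then show ?case
    using L_step[OF j1 jl, where h=h and H=F and D=D and M=M and \<sigma>=\<sigma> and cc=cc] by auto
qed

lemma Tw_rel:
  fixes cc :: "int \<Rightarrow> 'a::comm_ring_1"
  shows "Tw cc (int p) (int p) = cc (int p) * cc (int p)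
               + 2 * (\<Sum>i\<in>{1..p}. (-1) ^ i * cc (int p + int i) * cc (int p - int i))"
proof -
  define g where "g = (\<lambda>a. of_int (fi (a - int p)) * cc a * cc (int p + int p - a))"
  have "Tw cc (int p) (int p) = (\<Sum>a\<in>{0..int p + int p}. g a)" by (simp add: Tw_def g_def)
  also have "\<dots> = (\<Sum>a\<in>{int p..int p + int p}. g a)"
    by (rule sum.mono_neutral_right) (auto simp: g_def fi_def)
  also have "{int p..int p + int p} = insert (int p) {int p<..int p + int p}" by auto
  also have "(\<Sum>a\<in>insert (int p) {int p<..int p + int p}. g a) = g (int p) + (\<Sum>a\<in>{int p<..int p + int p}. g a)"
    by (simp add: sum.insert)
  also have "(\<Sum>a\<in>{int p<..int p + int p}. g a) = (\<Sum>i\<in>{1..p}. g (int p + int i))"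
  proof -
    have inj: "inj_on (\<lambda>i. int p + int i) {1..p}" by (auto simp: inj_on_def)
    have img: "(\<lambda>i. int p + int i) ` {1..p} = {int p<..int p + int p}"
    proof
      show "{int p<..int p + int p} \<subseteq> (\<lambda>i. int p + int i) ` {1..p}"
      proof
        fix a assume "a \<in> {int p<..int p + int p}"
        then have "a = int p + int (nat (a - int p))" "nat (a - int p) \<in> {1..p}" by auto
        then show "a \<in> (\<lambda>i. int p + int i) ` {1..p}" by blast
      qed
    qed auto
    show ?thesis using sum.reindex[OF inj, of g] img by simp
  qed
  also have "(\<Sum>i\<in>{1..p}. g (int p + int i)) = 2 * (\<Sum>i\<in>{1..p}. (-1) ^ i * cc (int p + int i) * cc (int p - int i))"
    unfolding sum_distrib_left
    by (intro sum.cong refl) (auto simp: g_def fi_def fD_def algebra_simps)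
  finally show ?thesis by (simp add: g_def fi_def fD_def)
qed

lemma Key:
  fixes \<sigma> :: "nat \<Rightarrow> int \<Rightarrow> 'a::comm_ring_1" and cc :: "int \<Rightarrow> 'a"
  assumes j1: "1 \<le> j" and jl: "j + 1 \<le> length \<alpha>"
    and HD: "\<forall>h\<in>{1..<j}. (h, j) \<in> D \<and> (h, j + 1) \<in> D"
    and rs: "\<alpha> ! (j - 1) + \<alpha> ! j > 2 * int k"
    and rel: "\<forall>p::nat. p > k \<longrightarrow> Tw cc (int p) (int p) = 0"
  shows "(\<Sum>n\<in>Bs (length \<alpha>) j M. wt D \<sigma> cc \<alpha> j n) = 0"
proof -
  have "(\<Sum>n\<in>Bs (length \<alpha>) j M. wt D \<sigma> cc \<alpha> j n) = (\<Sum>n\<in>Bs (length \<alpha>) j M \<inter> Z j {1..<j}. wt D \<sigma> cc \<alpha> j n)"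
    by (rule L_cancel[OF j1 jl]) (use HD in auto)
  also have "\<dots> = 0"
  proof (rule sum.neutral, rule ballI)
    fix n assume n: "n \<in> Bs (length \<alpha>) j M \<inter> Z j {1..<j}"
    define x where "x = E n \<alpha> j"
    define y where "y = E n \<alpha> (j + 1)"
    have z: "n (a, j) = 0" "n (a, j + 1) = 0" if "a \<in> {1..<j}" for a
      using n that by (auto simp: Z_def)
    have nq: "n (j, j + 1) = 0" using n by (auto simp: Bs_def Pp_def)
    have "x \<ge> \<alpha> ! (j - 1)"
    proof -
      have "(\<Sum>a\<in>{1..<j}. int (n (a, j))) = 0" using z by simp
      then show ?thesis unfolding x_def E_def by (simp add: sum_nonneg)
    qed
    moreover have "y \<ge> \<alpha> ! j"
    proof -
      have "(\<Sum>a\<in>{1..<j + 1}. int (n (a, j + 1))) = 0" using z nq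
        by (intro sum.neutral) (auto simp: less_Suc_eq)
      then show ?thesis unfolding y_def E_def by (simp add: sum_nonneg)
    qed
    ultimately have N: "x + y > 2 * int k" using rs by linarith
    have "Kf cc x y = 0"
    proof (cases "even (x + y)")
      case True
      then obtain t where "x + y = 2 * t" by blast
      then have "(x + y) div 2 > int k" using N by simp
      then have "Tw cc ((x + y) div 2) ((x + y) div 2) = 0"
      proof -
        have "int (nat ((x + y) div 2)) = (x + y) div 2" "k < nat ((x + y) div 2)"
          using \<open>(x + y) div 2 > int k\<close> by linarith+
        then show ?thesis using rel[rule_format, of "nat ((x + y) div 2)"] by simp
      qed
      then show ?thesis by (simp add: Kf_def)
    next
      case False
      then have "odd (x - y)" by presburger
      then show ?thesis by (simp add: Kf_def eps_def)
    qed
    then show "wt D \<sigma> cc \<alpha> j n = 0" by (simp add: wt_def x_def y_def)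
  qed
  finally show ?thesis .
qed


lemma RD_NS: "RD D \<sigma> \<alpha> = (\<Sum>n\<in>NS \<alpha>. of_int (RD_coeff D (length \<alpha>) n) * smon \<sigma> (raise n \<alpha>))"
  unfolding RD_def NS_def ..

lemma tau_lin:
  fixes \<sigma> :: "nat \<Rightarrow> int \<Rightarrow> 'a::comm_ring_1" and z :: 'a
  assumes j1: "1 \<le> j" and jl: "j \<le> length \<alpha>" and signeg: "\<forall>r\<ge>1. \<forall>i<0. \<sigma> r i = 0"
  shows "RD D (\<lambda>t p. if t = j then \<sigma> j p + z * \<sigma> j (p - 1) else \<sigma> t p) \<alpha>
       = RD D \<sigma> \<alpha> + z * RD D \<sigma> (\<alpha>[j - 1 := \<alpha> ! (j - 1) - 1])"
proof -
  define l where "l = length \<alpha>"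
  define \<beta> where "\<beta> = \<alpha>[j - 1 := \<alpha> ! (j - 1) - 1]"
  define \<tau> where "\<tau> = (\<lambda>t p. if t = j then \<sigma> j p + z * \<sigma> j (p - 1) else \<sigma> t p)"
  have lb: "length \<beta> = l" by (simp add: \<beta>_def l_def)
  have Eb: "E n \<beta> m = E n \<alpha> m - (if m = j then 1 else 0)" if "m \<in> {1..l}" for n m
  proof -
    have "\<beta> ! (m - 1) = \<alpha> ! (m - 1) - (if m = j then 1 else 0)"
      using that j1 jl by (auto simp: \<beta>_def l_def nth_list_update)
    then show ?thesis unfolding E_def using lb by (simp add: l_def)
  qed
  have jin: "j \<in> {1..l}" using j1 jl by (simp add: l_def)
  have sm: "smon \<tau> (raise n \<alpha>) = smon \<sigma> (raise n \<alpha>) + z * smon \<sigma> (raise n \<beta>)" for n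
  proof -
    have "smon \<tau> (raise n \<alpha>) = \<tau> j (E n \<alpha> j) * (\<Prod>m\<in>{1..l} - {j}. \<tau> m (E n \<alpha> m))"
      unfolding smon_raise l_def[symmetric] using prod.remove[OF finite_atLeastAtMost jin] by simp
    also have "(\<Prod>m\<in>{1..l} - {j}. \<tau> m (E n \<alpha> m)) = (\<Prod>m\<in>{1..l} - {j}. \<sigma> m (E n \<alpha> m))"
      by (intro prod.cong) (auto simp: \<tau>_def)
    also have "(\<Prod>m\<in>{1..l} - {j}. \<sigma> m (E n \<alpha> m)) = (\<Prod>m\<in>{1..l} - {j}. \<sigma> m (E n \<beta> m))"
      by (intro prod.cong) (auto simp: Eb)
    finally have "smon \<tau> (raise n \<alpha>) = (\<sigma> j (E n \<alpha> j) + z * \<sigma> j (E n \<alpha> j - 1)) * (\<Prod>m\<in>{1..l} - {j}. \<sigma> m (E n \<beta> m))"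
      by (simp add: \<tau>_def)
    moreover have "smon \<sigma> (raise n \<alpha>) = \<sigma> j (E n \<alpha> j) * (\<Prod>m\<in>{1..l} - {j}. \<sigma> m (E n \<beta> m))"
    proof -
      have "smon \<sigma> (raise n \<alpha>) = \<sigma> j (E n \<alpha> j) * (\<Prod>m\<in>{1..l} - {j}. \<sigma> m (E n \<alpha> m))"
        unfolding smon_raise l_def[symmetric] using prod.remove[OF finite_atLeastAtMost jin] by simp
      also have "(\<Prod>m\<in>{1..l} - {j}. \<sigma> m (E n \<alpha> m)) = (\<Prod>m\<in>{1..l} - {j}. \<sigma> m (E n \<beta> m))"
        by (intro prod.cong) (auto simp: Eb)
      finally show ?thesis .
    qed
    moreover have "smon \<sigma> (raise n \<beta>) = \<sigma> j (E n \<alpha> j - 1) * (\<Prod>m\<in>{1..l} - {j}. \<sigma> m (E n \<beta> m))"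
      unfolding smon_raise lb using prod.remove[OF finite_atLeastAtMost jin, of "\<lambda>m. \<sigma> m (E n \<beta> m)"] Eb[OF jin] by simp
    ultimately show ?thesis by (simp add: algebra_simps)
  qed
  have sub: "NS \<beta> \<subseteq> NS \<alpha>"
  proof
    fix n assume "n \<in> NS \<beta>"
    then have s1: "\<forall>p. p \<notin> pairs l \<longrightarrow> n p = 0" and s2: "\<forall>m\<in>{1..l}. 0 \<le> E n \<beta> m"
      unfolding NS_def raise_nonneg lb by auto
    have "\<forall>m\<in>{1..l}. 0 \<le> E n \<alpha> m"
    proof
      fix m assume m: "m \<in> {1..l}"
      show "0 \<le> E n \<alpha> m" using s2[rule_format, OF m] Eb[OF m, of n] by (simp split: if_splits)
    qed
    then show "n \<in> NS \<alpha>" unfolding NS_def raise_nonneg l_def[symmetric]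
      using s1 by simp
  qed
  have RDb: "RD D \<sigma> \<beta> = (\<Sum>n\<in>NS \<alpha>. of_int (RD_coeff D l n) * smon \<sigma> (raise n \<beta>))"
    using RD_ext[OF NS_finite _ sub signeg, of D] lb by (simp add: NS_def l_def)
  have "RD D \<tau> \<alpha> = (\<Sum>n\<in>NS \<alpha>. of_int (RD_coeff D l n) * smon \<tau> (raise n \<alpha>))"
    by (simp add: RD_NS l_def)
  also have "\<dots> = (\<Sum>n\<in>NS \<alpha>. of_int (RD_coeff D l n) * smon \<sigma> (raise n \<alpha>))
        + z * (\<Sum>n\<in>NS \<alpha>. of_int (RD_coeff D l n) * smon \<sigma> (raise n \<beta>))"
    unfolding sm by (simp add: sum.distrib sum_distrib_left algebra_simps)
  also have "\<dots> = RD D \<sigma> \<alpha> + z * RD D \<sigma> \<beta>"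
    unfolding RDb by (simp only: RD_NS l_def)
  finally show ?thesis by (simp add: \<tau>_def \<beta>_def)
qed


lemma part_a:
  fixes \<sigma> :: "nat \<Rightarrow> int \<Rightarrow> 'a::comm_ring_1" and cc :: "int \<Rightarrow> 'a"
  assumes j1: "1 \<le> j" and jl: "j + 1 \<le> length \<alpha>"
    and signeg: "\<forall>r\<ge>1. \<forall>i<0. \<sigma> r i = 0" and cneg: "\<forall>i<0. cc i = 0"
    and sj: "\<sigma> j = cc" and sj1: "\<sigma> (j + 1) = cc" and jD: "(j, j + 1) \<in> D"
    and HD: "\<forall>h\<in>{1..<j}. (h, j) \<in> D \<and> (h, j + 1) \<in> D"
    and Dsym: "\<forall>p\<in>Pp (length \<alpha>) j. (tp j p \<in> D \<longleftrightarrow> p \<in> D)"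
    and len: "length \<alpha>' = length \<alpha>"
    and a': "\<forall>m\<in>{1..length \<alpha>}. \<alpha>' ! (m - 1) = \<alpha> ! (tr j m - 1)"
    and rs: "\<alpha> ! (j - 1) + \<alpha> ! j > 2 * int k"
    and rel: "\<forall>p::nat. p > k \<longrightarrow> Tw cc (int p) (int p) = 0"
  shows "RD D \<sigma> \<alpha> = - RD D \<sigma> \<alpha>'"
proof -
  define l where "l = length \<alpha>"
  define M where "M = nat (max (Pot \<alpha>) (Pot \<alpha>'))"
  have MP: "Pot \<alpha> \<le> int M" "Pot \<alpha>' \<le> int M" unfolding M_def by auto
  have d1: "RD D \<sigma> \<alpha> = (\<Sum>n\<in>Bs l j M. of_int (RD_coeff D l n) * rest \<sigma> \<alpha> j n * Tw cc (E n \<alpha> j) (E n \<alpha> (j + 1)))"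
    using decomp[OF j1 jl signeg cneg sj sj1 jD MP(1)] by (simp add: l_def)
  have d2: "RD D \<sigma> \<alpha>' = (\<Sum>n\<in>Bs l j M. of_int (RD_coeff D l n) * rest \<sigma> \<alpha>' j n * Tw cc (E n \<alpha>' j) (E n \<alpha>' (j + 1)))"
    using decomp[of j \<alpha>' \<sigma> cc D M] j1 jl signeg cneg sj sj1 jD len MP(2) by (simp add: l_def)
  also have "\<dots> = (\<Sum>n\<in>Bs l j M. of_int (RD_coeff D l n) * rest \<sigma> \<alpha> j n * Tw cc (E n \<alpha> (j + 1)) (E n \<alpha> j))"
    unfolding l_def by (rule sw_sum[OF jl j1 len a' Dsym])
  finally have d2': "RD D \<sigma> \<alpha>' = \<dots>" .
  have "RD D \<sigma> \<alpha> + RD D \<sigma> \<alpha>' = (\<Sum>n\<in>Bs l j M. of_int (RD_coeff D l n) * rest \<sigma> \<alpha> j n *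
          (Tw cc (E n \<alpha> j) (E n \<alpha> (j + 1)) + Tw cc (E n \<alpha> (j + 1)) (E n \<alpha> j)))"
    unfolding d1 d2' by (simp add: sum.distrib[symmetric] algebra_simps)
  also have "\<dots> = 2 * (\<Sum>n\<in>Bs l j M. wt D \<sigma> cc \<alpha> j n)"
    unfolding Tw_swap_sum wt_def l_def by (simp add: sum_distrib_left algebra_simps)
  also have "\<dots> = 0"
    using Key[OF j1 jl HD rs rel, where M=M and \<sigma>=\<sigma>] by (simp add: l_def)
  finally show ?thesis by (simp add: eq_neg_iff_add_eq_0)
qed

lemma ring_aux: fixes a b c :: "'a::comm_ring_1" assumes "a + b = 2 * c" shows "b - c = - (a - c)"
proof -
  have "b = 2 * c - a" using assms by (metis add_diff_cancel_left')
  then show ?thesis by (simp add: mult_2 algebra_simps)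
qed

lemma part_b:
  fixes \<sigma> :: "nat \<Rightarrow> int \<Rightarrow> 'a::comm_ring_1" and cc :: "int \<Rightarrow> 'a"
  assumes j1: "1 \<le> j" and jl: "j + 1 \<le> length \<alpha>"
    and signeg: "\<forall>r\<ge>1. \<forall>i<0. \<sigma> r i = 0" and cneg: "\<forall>i<0. cc i = 0"
    and sj: "\<sigma> j = cc" and sj1: "\<sigma> (j + 1) = cc" and jD: "(j, j + 1) \<in> D"
    and HD: "\<forall>h\<in>{1..<j}. (h, j) \<in> D \<and> (h, j + 1) \<in> D"
    and Dsym: "\<forall>p\<in>Pp (length \<alpha>) j. (tp j p \<in> D \<longleftrightarrow> p \<in> D)"
    and a': "\<forall>m\<in>{1..length \<alpha>}. \<alpha> ! (m - 1) = \<alpha> ! (tr j m - 1)"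
    and rs: "\<alpha> ! (j - 1) + \<alpha> ! j > 2 * int k"
    and rel: "\<forall>p::nat. p > k \<longrightarrow> Tw cc (int p) (int p) = 0"
  shows "RD D \<sigma> \<alpha> = 0"
proof -
  define l where "l = length \<alpha>"
  define M where "M = nat (Pot \<alpha>)"
  define g where "g = (\<lambda>n. of_int (RD_coeff D l n) * rest \<sigma> \<alpha> j n *
                 (Tw cc (E n \<alpha> j) (E n \<alpha> (j + 1)) - Kf cc (E n \<alpha> j) (E n \<alpha> (j + 1))))"
  have MP: "Pot \<alpha> \<le> int M" unfolding M_def by auto
  have d1: "RD D \<sigma> \<alpha> = (\<Sum>n\<in>Bs l j M. of_int (RD_coeff D l n) * rest \<sigma> \<alpha> j n * Tw cc (E n \<alpha> j) (E n \<alpha> (j + 1)))"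
    using decomp[OF j1 jl signeg cneg sj sj1 jD MP] by (simp add: l_def)
  have W: "(\<Sum>n\<in>Bs l j M. wt D \<sigma> cc \<alpha> j n) = 0"
    using Key[OF j1 jl HD rs rel, where M=M and \<sigma>=\<sigma>] by (simp add: l_def)
  have "RD D \<sigma> \<alpha> = (\<Sum>n\<in>Bs l j M. g n + wt D \<sigma> cc \<alpha> j n)"
    unfolding d1 by (rule sum.cong[OF refl]) (simp add: g_def wt_def l_def right_diff_distrib)
  also have "\<dots> = (\<Sum>n\<in>Bs l j M. g n) + (\<Sum>n\<in>Bs l j M. wt D \<sigma> cc \<alpha> j n)"
    by (rule sum.distrib)
  finally have RDe: "RD D \<sigma> \<alpha> = (\<Sum>n\<in>Bs l j M. g n) + (\<Sum>n\<in>Bs l j M. wt D \<sigma> cc \<alpha> j n)" .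
  have G0: "(\<Sum>n\<in>Bs l j M. g n) = 0"
  proof -
    have pt: "g (sw j n) = - g n" "sw j n = n \<Longrightarrow> g n = 0" if n: "n \<in> Bs l j M" for n
    proof -
      have supp: "\<forall>p. p \<notin> Pp (length \<alpha>) j \<longrightarrow> n p = 0" using n by (simp add: Bs_def l_def)
      have e1: "E (sw j n) \<alpha> j = E n \<alpha> (j + 1)"
        using sw_E[OF jl j1 supp refl a', of j] jl j1 by (simp add: tr_def)
      have e2: "E (sw j n) \<alpha> (j + 1) = E n \<alpha> j"
        using sw_E[OF jl j1 supp refl a', of "j + 1"] jl j1 by (simp add: tr_def)
      have co: "RD_coeff D l (sw j n) = RD_coeff D l n"
        using sw_coeff[OF jl j1 _ Dsym] n by (simp add: l_def)
      have re: "rest \<sigma> \<alpha> j (sw j n) = rest \<sigma> \<alpha> j n"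
        by (rule sw_rest[OF jl j1 supp refl a'])
      have anti: "Tw cc y x - Kf cc y x = - (Tw cc x y - Kf cc x y)" for x y
        using ring_aux[OF Tw_swap_sum[of cc x y]] Kf_sym[of cc y x] by simp
      show "g (sw j n) = - g n"
        unfolding g_def co re e1 e2 anti[of "E n \<alpha> (j + 1)" "E n \<alpha> j"] by (simp add: right_diff_distrib)
      show "g n = 0" if "sw j n = n"
      proof -
        have eq: "E n \<alpha> j = E n \<alpha> (j + 1)" using e1 that by simp
        show ?thesis unfolding g_def eq Kf_diag by simp
      qed
    qed
    have "(\<Sum>n\<in>Bs l j M. g n) = (\<Sum>n\<in>{n\<in>Bs l j M. sw j n \<noteq> n}. g n)"
      by (rule sum.mono_neutral_right) (auto simp: Bs_finite pt(2))
    also have "\<dots> = 0"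
    proof (rule sum_involution_eq_0[where h = "sw j"])
      fix n assume "n \<in> {n \<in> Bs l j M. sw j n \<noteq> n}"
      then show "g (sw j n) + g n = 0" using pt(1) by simp
    next
      have jl': "j + 1 \<le> l" using jl by (simp add: l_def)
      fix n assume n: "n \<in> {n \<in> Bs l j M. sw j n \<noteq> n}"
      then show "sw j n \<in> {n \<in> Bs l j M. sw j n \<noteq> n}"
        using sw_Bs[OF jl' j1, of n M] by (auto simp: eq_commute[of "sw j n" n])
    next
      fix n show "sw j (sw j n) = n" by simp
    next
      fix n assume "n \<in> {n \<in> Bs l j M. sw j n \<noteq> n}"
      then show "sw j n \<noteq> n" by simp
    qed
    finally show ?thesis .
  qed
  show ?thesis using RDe G0 W by simp
qed


lemma HD_lemma:
  assumes "valid_pairs D" "(j, j + 1) \<in> D"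
  shows "\<forall>h\<in>{1..<j}. (h, j) \<in> D \<and> (h, j + 1) \<in> D"
proof
  fix h assume h: "h \<in> {1..<j}"
  have v: "\<forall>i j i' j'. (i, j) \<in> D \<and> 1 \<le> i' \<and> i' < j' \<and> i' \<le> i \<and> j' \<le> j \<longrightarrow> (i', j') \<in> D"
    using assms(1) unfolding valid_pairs_def by blast
  show "(h, j) \<in> D \<and> (h, j + 1) \<in> D"
    using v[rule_format, of j "j + 1" h j] v[rule_format, of j "j + 1" h "j + 1"] h assms(2) by auto
qed

lemma Dsym_lemma:
  assumes v: "valid_pairs D" and jD: "(j, j + 1) \<in> D" and Ds: "\<forall>h>j + 1. (j, h) \<in> D \<longleftrightarrow> (j + 1, h) \<in> D"
  shows "\<forall>p\<in>Pp l j. (tp j p \<in> D \<longleftrightarrow> p \<in> D)"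
proof
  fix p assume p: "p \<in> Pp l j"
  obtain a b where ab: "p = (a, b)" by (cases p)
  have HD: "\<forall>h\<in>{1..<j}. (h, j) \<in> D \<and> (h, j + 1) \<in> D" by (rule HD_lemma[OF v jD])
  have a1: "1 \<le> a" "a < b" "(a, b) \<noteq> (j, j + 1)" using p ab by (auto simp: Pp_def pairs_def)
  show "tp j p \<in> D \<longleftrightarrow> p \<in> D"
  proof (cases "a = j \<or> a = j + 1")
    case True
    then have "b > j + 1" using a1 by auto
    then show ?thesis using True Ds ab by (auto simp: tp_def tr_def)
  next
    case False
    then have ta: "tr j a = a" by (simp add: tr_def)
    show ?thesis
    proof (cases "b = j \<or> b = j + 1")
      case True
      then have "a \<in> {1..<j}" using a1 False by auto
      then show ?thesis using HD True ab ta by (auto simp: tp_def tr_def)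
    next
      case False
      then show ?thesis using ab ta by (simp add: tp_def tr_def)
    qed
  qed
qed

lemma swap_nth:
  assumes "length lam = j - 1" "1 \<le> j" "1 \<le> m"
  shows "(lam @ [s, r] @ mu) ! (m - 1) = (lam @ [r, s] @ mu) ! (tr j m - 1)"
proof -
  consider "m < j" | "m = j" | "m = j + 1" | "m > j + 1" by linarith
  then show ?thesis
  proof cases
    case 1
    then have "m - 1 < length lam" "tr j m = m" using assms by (auto simp: tr_def)
    then show ?thesis by (simp add: nth_append)
  next
    case 2
    then have "m - 1 = length lam" "tr j m - 1 = Suc (length lam)" using assms by (auto simp: tr_def)
    then show ?thesis by (simp add: nth_append)
  next
    case 3
    then have "m - 1 = Suc (length lam)" "tr j m - 1 = length lam" using assms by (auto simp: tr_def)
    then show ?thesis by (simp add: nth_append)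
  next
    case 4
    then have "m - 1 = Suc (Suc (length lam)) + (m - j - 2)" "tr j m = m" using assms by (auto simp: tr_def)
    then show ?thesis by (simp add: nth_append)
  qed
qed

theorem lemma7:
  fixes \<sigma> :: "nat \<Rightarrow> int \<Rightarrow> 'a::comm_ring_1"
    and c :: "int \<Rightarrow> 'a"
    and D :: "(nat \<times> nat) set"
    and k j :: nat
    and lam mu :: "int list"
  assumes sig0: "\<forall>r\<ge>1. \<sigma> r 0 = 1"
    and signeg: "\<forall>r\<ge>1. \<forall>i<0. \<sigma> r i = 0"
    and c0: "c 0 = 1"
    and cneg: "\<forall>i<0. c i = 0"
    and j1: "j \<ge> 1"
    and len_lam: "length lam = j - 1"
    and valid: "valid_pairs D"
    and sigj: "\<sigma> j = c" and sigj1: "\<sigma> (j + 1) = c"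
    and jj1: "(j, j + 1) \<in> D"
    and Dsym: "\<forall>h>j + 1. (j, h) \<in> D \<longleftrightarrow> (j + 1, h) \<in> D"
    and rel: "\<forall>p::nat. p > k \<longrightarrow>
               c (int p) * c (int p)
               + 2 * (\<Sum>i\<in>{1..p}. (-1) ^ i * c (int p + int i) * c (int p - int i)) = 0"
  shows "(\<forall>r s::int. r + s > 2 * int k \<longrightarrow>
            RD D \<sigma> (lam @ [r, s] @ mu) = - RD D \<sigma> (lam @ [s, r] @ mu))
       \<and> (\<forall>(z::'a) (r::int). r > int k \<longrightarrow>
            RD D (\<lambda>t p. if t = j then \<sigma> j p + z * \<sigma> j (p - 1) else \<sigma> t p) (lam @ [r + 1, r] @ mu)
            = RD D \<sigma> (lam @ [r + 1, r] @ mu))"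
proof -
  have HD: "\<forall>h\<in>{1..<j}. (h, j) \<in> D \<and> (h, j + 1) \<in> D" by (rule HD_lemma[OF valid jj1])
  have DS: "\<forall>p\<in>Pp l j. (tp j p \<in> D \<longleftrightarrow> p \<in> D)" for l by (rule Dsym_lemma[OF valid jj1 Dsym])
  have rel': "\<forall>p::nat. p > k \<longrightarrow> Tw c (int p) (int p) = 0"
    using rel by (simp add: Tw_rel)
  have len: "length (lam @ [r, s] @ mu) = j + 1 + length mu" for r s :: int
    using len_lam j1 by simp
  have n1: "(lam @ [r, s] @ mu) ! (j - 1) = r" for r s :: int
    using len_lam by (simp add: nth_append)
  have n2: "(lam @ [r, s] @ mu) ! j = s" for r s :: int
  proof -
    have "j = Suc (length lam)" using len_lam j1 by simp
    then show ?thesis by (simp add: nth_append)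
  qed
  have jl: "j + 1 \<le> length (lam @ [r, s] @ mu)" for r s :: int
    using len by simp
  have sw': "\<forall>m\<in>{1..length (lam @ [r, s] @ mu)}. (lam @ [s, r] @ mu) ! (m - 1) = (lam @ [r, s] @ mu) ! (tr j m - 1)"
    for r s :: int
    using swap_nth[OF len_lam j1] by auto
  show ?thesis
  proof (intro conjI allI impI)
    fix r s :: int assume rs: "r + s > 2 * int k"
    show "RD D \<sigma> (lam @ [r, s] @ mu) = - RD D \<sigma> (lam @ [s, r] @ mu)"
    proof (rule part_a[OF j1 jl signeg cneg sigj sigj1 jj1 HD DS _ sw' _ rel'])
      show "length (lam @ [s, r] @ mu) = length (lam @ [r, s] @ mu)" by simp
      show "(lam @ [r, s] @ mu) ! (j - 1) + (lam @ [r, s] @ mu) ! j > 2 * int k"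
        using rs n1[of r s] n2[of r s] by simp
    qed
  next
    fix z :: 'a and r :: int assume rk: "r > int k"
    have jle: "j \<le> length (lam @ [r + 1, r] @ mu)" using len by simp
    have upd: "(lam @ [r + 1, r] @ mu)[j - 1 := (lam @ [r + 1, r] @ mu) ! (j - 1) - 1] = lam @ [r, r] @ mu"
      using len_lam n1[of "r + 1" r] by (simp add: list_update_append)
    have "RD D \<sigma> (lam @ [r, r] @ mu) = 0"
    proof (rule part_b[OF j1 jl signeg cneg sigj sigj1 jj1 HD DS sw' _ rel'])
      show "(lam @ [r, r] @ mu) ! (j - 1) + (lam @ [r, r] @ mu) ! j > 2 * int k"
        using rk n1[of r r] n2[of r r] by simp
    qed
    then show "RD D (\<lambda>t p. if t = j then \<sigma> j p + z * \<sigma> j (p - 1) else \<sigma> t p) (lam @ [r + 1, r] @ mu)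
            = RD D \<sigma> (lam @ [r + 1, r] @ mu)"
      using tau_lin[OF j1 jle signeg, of D z] upd by simp
  qed
qed

end
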